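(* Let $D\subset\mathbb R^m$ ($m\ge1$) be a domain, let $F_\epsilon:D\to\mathbb R^m$ be a smooth family of near-identity maps, and let $n\in\mathbb N$. Suppose a suspension $Y$ of $F_\epsilon$ can be written in the form $$Y(\tau,x,\epsilon)=A_n(x,\epsilon)+\epsilon^{2n}B_n(\tau,x,\epsilon),$$ where the $\mathcal C^{2n}$ norms of $A_n$ and $B_n$ are bounded uniformly with respect to $\epsilon$. Then for every compact $D_0\subset D$ there are constants $\epsilon_1>0$ and $C_n$ such that for all $0<|\epsilon|<\epsilon_1$, $$\sup_{x\in D_0}\bigl|A_n(x,\epsilon)-X_n(x,\epsilon)\bigr|\le C_n\epsilon^{2n},$$ where $X_n$ is the interpolating vector field of $F_\epsilon$.
   Context: A suspension of $F_\epsilon$ is a vector field $Y(\tau,x,\epsilon)$, $1$-periodic in $\tau$, such that the solution $\xi(\tau,x,\epsilon)$ of $\partial_\tau\xi=\epsilon Y(\tau,\xi,\epsilon)$, $\xi(0,x,\epsilon)=x$, satisfies $\xi(1,x,\epsilon)=F_\epsilon(x)$. For $\epsilon\neq0$ and $x$ whose iterates $x_k=F_\epsilon^k(x)$, $|k|\le n$, are defined (negative $k$ meaning iterates of the inverse), the interpolating vector field is $$X_n(x,\epsilon)=\epsilon^{-1}\sum_{k=1}^n p_{nk}\bigl(x_k-x_{-k}\bigr),\qquad p_{nk}=\frac{(-1)^{k+1}(n!)^2}{k(n+k)!(n-k)!}.$$ *)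

theory Defs
  imports "HOL-Analysis.Analysis"
begin

fun pderivs :: "'a list \<Rightarrow> ('a::real_normed_vector \<Rightarrow> 'b::real_normed_vector) \<Rightarrow> 'a \<Rightarrow> 'b" where
  "pderivs [] f = f"
| "pderivs (v # vs) f = (\<lambda>x. frechet_derivative (pderivs vs f) (at x) v)"

definition Ck_on :: "nat \<Rightarrow> 'a::euclidean_space set \<Rightarrow> ('a \<Rightarrow> 'b::real_normed_vector) \<Rightarrow> bool" where
  "Ck_on k S f \<longleftrightarrow>
     (\<forall>vs. set vs \<subseteq> Basis \<longrightarrow>
        (length vs < k \<longrightarrow> pderivs vs f differentiable_on S) \<and>
        (length vs \<le> k \<longrightarrow> continuous_on S (pderivs vs f)))"

definition smooth_on :: "'a::euclidean_space set \<Rightarrow> ('a \<Rightarrow> 'b::real_normed_vector) \<Rightarrow> bool" where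
  "smooth_on S f \<longleftrightarrow> (\<forall>k. Ck_on k S f)"

definition Ck_bounded :: "nat \<Rightarrow> 'a::euclidean_space set \<Rightarrow> ('a \<Rightarrow> 'b::real_normed_vector) \<Rightarrow> real \<Rightarrow> bool" where
  "Ck_bounded k S f M \<longleftrightarrow> Ck_on k S f \<and>
     (\<forall>vs. set vs \<subseteq> Basis \<longrightarrow> length vs \<le> k \<longrightarrow> (\<forall>x\<in>S. norm (pderivs vs f x) \<le> M))"

definition suspension :: "'a::euclidean_space set \<Rightarrow> (real \<Rightarrow> 'a \<Rightarrow> 'a) \<Rightarrow> (real \<Rightarrow> 'a \<Rightarrow> real \<Rightarrow> 'a) \<Rightarrow> real \<Rightarrow> bool" where
  "suspension D F Y \<epsilon> \<longleftrightarrow>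
     (\<forall>\<tau>. \<forall>x\<in>D. Y (\<tau> + 1) x \<epsilon> = Y \<tau> x \<epsilon>) \<and>
     (\<forall>x\<in>D. \<forall>\<xi>. \<xi> 0 = x \<and>
        (\<forall>t\<in>{0..1}. \<xi> t \<in> D \<and> (\<xi> has_vector_derivative (\<epsilon> *\<^sub>R Y t (\<xi> t) \<epsilon>)) (at t within {0..1}))
        \<longrightarrow> \<xi> 1 = F \<epsilon> x)"

definition pcoef :: "nat \<Rightarrow> nat \<Rightarrow> real" where
  "pcoef n k = (-1) ^ (k + 1) * (fact n)\<^sup>2 / (real k * fact (n + k) * fact (n - k))"

definition Finv :: "'a set \<Rightarrow> (real \<Rightarrow> 'a \<Rightarrow> 'a) \<Rightarrow> real \<Rightarrow> 'a \<Rightarrow> 'a" where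
  "Finv D F \<epsilon> = inv_into D (F \<epsilon>)"

text \<open>All iterates x_k, |k| \<le> n, are defined: x_0,...,x_{n-1} lie in D (so F can be applied),
  and x_0, x_{-1}, ..., x_{-(n-1)} lie in F_eps(D) (so the inverse can be applied).\<close>
definition iterates_defined :: "'a set \<Rightarrow> (real \<Rightarrow> 'a \<Rightarrow> 'a) \<Rightarrow> nat \<Rightarrow> real \<Rightarrow> 'a \<Rightarrow> bool" where
  "iterates_defined D F n \<epsilon> x \<longleftrightarrow>
     (\<forall>k<n. (F \<epsilon> ^^ k) x \<in> D \<and> (Finv D F \<epsilon> ^^ k) x \<in> F \<epsilon> ` D)"

definition interp_field :: "'a::real_vector set \<Rightarrow> (real \<Rightarrow> 'a \<Rightarrow> 'a) \<Rightarrow> nat \<Rightarrow> real \<Rightarrow> 'a \<Rightarrow> 'a" where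
  "interp_field D F n \<epsilon> x =
     (1 / \<epsilon>) *\<^sub>R (\<Sum>k=1..n. pcoef n k *\<^sub>R ((F \<epsilon> ^^ k) x - (Finv D F \<epsilon> ^^ k) x))"

end

theory Submission
  imports Defs
begin


lemma alt_pow:
  "i < N \<Longrightarrow> (\<Sum>j\<le>N. (-1)^j * real (N choose j) * real j ^ i) = 0"
proof (induction N arbitrary: i)
  case 0 then show ?case by simp
next
  case (Suc N)
  show ?case
  proof (cases i)
    case 0
    then show ?thesis using choose_alternating_sum[of "Suc N", where 'a=real] by simp
  next
    case (Suc i')
    have "(\<Sum>j\<le>Suc N. (-1)^j * real (Suc N choose j) * real j ^ i)
        = (\<Sum>j\<le>N. (-1)^(Suc j) * real (Suc N choose Suc j) * real (Suc j) ^ i)"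
      by (subst sum.atMost_Suc_shift) (simp add: Suc)
    also have "\<dots> = (\<Sum>j\<le>N. - real (Suc N) * ((-1)^j * real (N choose j) * real (Suc j) ^ i'))"
    proof (rule sum.cong[OF refl])
      fix j
      have "real (Suc j) * real (Suc N choose Suc j) = real (Suc N) * real (N choose j)"
        using Suc_times_binomial[of j N] by (metis of_nat_mult)
      then show "(-1)^(Suc j) * real (Suc N choose Suc j) * real (Suc j) ^ i
          = - real (Suc N) * ((-1)^j * real (N choose j) * real (Suc j) ^ i')"
        by (simp only: Suc power_Suc) (simp del: binomial_Suc_Suc of_nat_Suc add: algebra_simps)
    qed
    also have "\<dots> = - real (Suc N) * (\<Sum>j\<le>N. (-1)^j * real (N choose j) * real (Suc j) ^ i')"
      by (simp add: sum_distrib_left)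
    also have "(\<Sum>j\<le>N. (-1)^j * real (N choose j) * real (Suc j) ^ i')
        = (\<Sum>j\<le>N. \<Sum>l\<le>i'. real (i' choose l) * ((-1)^j * real (N choose j) * real j ^ l))"
    proof (rule sum.cong[OF refl])
      fix j
      have "real (Suc j) ^ i' = (\<Sum>l\<le>i'. real (i' choose l) * real j ^ l * 1 ^ (i' - l))"
        using binomial_ring[of "real j" 1 i'] by (simp add: add.commute)
      then show "(-1)^j * real (N choose j) * real (Suc j) ^ i'
          = (\<Sum>l\<le>i'. real (i' choose l) * ((-1)^j * real (N choose j) * real j ^ l))"
        by (simp add: sum_distrib_left algebra_simps)
    qed
    also have "\<dots> = (\<Sum>l\<le>i'. real (i' choose l) * (\<Sum>j\<le>N. (-1)^j * real (N choose j) * real j ^ l))"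
      by (subst sum.swap) (simp add: sum_distrib_left)
    also have "\<dots> = 0"
      using Suc.prems \<open>i = Suc i'\<close> by (intro sum.neutral ballI) (simp add: Suc.IH)
    finally show ?thesis by simp
  qed
qed

lemma alt_shift:
  assumes "e < N"
  shows "(\<Sum>j\<le>N. (-1)^j * real (N choose j) * (real j - c) ^ e) = 0"
proof -
  have "(\<Sum>j\<le>N. (-1)^j * real (N choose j) * (real j - c) ^ e)
      = (\<Sum>j\<le>N. \<Sum>l\<le>e. (real (e choose l) * (-c)^(e-l)) * ((-1)^j * real (N choose j) * real j ^ l))"
  proof (rule sum.cong[OF refl])
    fix j
    have "(real j - c) ^ e = (\<Sum>l\<le>e. real (e choose l) * real j ^ l * (-c) ^ (e - l))"
      using binomial_ring[of "real j" "-c" e] by simp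
    then show "(-1)^j * real (N choose j) * (real j - c) ^ e
       = (\<Sum>l\<le>e. (real (e choose l) * (-c)^(e-l)) * ((-1)^j * real (N choose j) * real j ^ l))"
      by (simp add: sum_distrib_left algebra_simps)
  qed
  also have "\<dots> = (\<Sum>l\<le>e. (real (e choose l) * (-c)^(e-l)) * (\<Sum>j\<le>N. (-1)^j * real (N choose j) * real j ^ l))"
    by (subst sum.swap) (simp add: sum_distrib_left)
  also have "\<dots> = 0"
    using assms by (intro sum.neutral ballI) (simp add: alt_pow)
  finally show ?thesis .
qed

lemma sum_split_mid:
  fixes f :: "nat \<Rightarrow> real"
  shows "(\<Sum>j\<le>2*n. f j) = f n + (\<Sum>k=1..n. f (n + k) + f (n - k))"
proof -
  have "{..2*n} = {..<n} \<union> {n..2*n}" by auto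
  then have "(\<Sum>j\<le>2*n. f j) = sum f ({..<n} \<union> {n..2*n})" by simp
  also have "\<dots> = (\<Sum>j<n. f j) + (\<Sum>j=n..2*n. f j)"
    by (rule sum.union_disjoint) auto
  also have "(\<Sum>j<n. f j) = (\<Sum>i<n. f (n - Suc i))"
    by (rule sum.nat_diff_reindex[symmetric])
  also have "\<dots> = (\<Sum>k=1..n. f (n - k))"
    by (rule sum.reindex_bij_witness[where i="\<lambda>k. k - 1" and j="\<lambda>i. Suc i"]) auto
  also have "(\<Sum>j=n..2*n. f j) = f n + (\<Sum>j=Suc n..2*n. f j)"
    by (simp add: sum.atLeast_Suc_atMost)
  also have "(\<Sum>j=Suc n..2*n. f j) = (\<Sum>k=1..n. f (n + k))"
    by (rule sum.reindex_bij_witness[where i="\<lambda>k. n + k" and j="\<lambda>j. j - n"]) auto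
  finally show ?thesis by (simp add: sum.distrib)
qed

lemma pcoef_moment:
  assumes "1 \<le> n" "odd m" "m < 2*n"
  shows "(\<Sum>k=1..n. pcoef n k * 2 * real k ^ m) = (if m = 1 then 1 else 0)"
proof -
  obtain e where e: "m = Suc e" "even e" using assms(2) by (metis odd_Suc_minus_one odd_pos Suc_pred even_Suc)
  define f where "f j = (-1)^j * real ((2*n) choose j) * (real j - real n) ^ e" for j
  have full: "(\<Sum>j\<le>2*n. f j) = 0" unfolding f_def using assms e by (intro alt_shift) simp
  have fk: "f (n + k) + f (n - k) = 2 * ((-1)^(n+k) * real ((2*n) choose (n+k)) * real k ^ e)"
    if "k \<in> {1..n}" for k
  proof -
    have "(2*n) choose (n-k) = (2*n) choose (n+k)"
      using binomial_symmetric[of "n-k" "2*n"] that by (simp add: diff_diff_right)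
    moreover have "(-1::real)^(n-k) = (-1)^(n+k)"
    proof -
      have "n + k = (n - k) + 2*k" using that by simp
      then have "(-1::real)^(n+k) = (-1)^(n-k) * ((-1)^2)^k" by (simp only: power_add power_mult)
      then show ?thesis by simp
    qed
    moreover have "(real (n - k) - real n) ^ e = real k ^ e"
    proof -
      have "real (n-k) - real n = - real k" using that by (simp add: of_nat_diff)
      then show ?thesis using e(2) by (simp add: power_minus_even)
    qed
    ultimately show ?thesis unfolding f_def by simp
  qed
  have "f n = (-1)^n * real ((2*n) choose n) * (if e = 0 then 1 else 0)"
    unfolding f_def by simp
  with full sum_split_mid[of f n] fk
  have key: "(-1)^n * real ((2*n) choose n) * (if e = 0 then 1 else 0)
      + 2 * (\<Sum>k=1..n. (-1)^(n+k) * real ((2*n) choose (n+k)) * real k ^ e) = 0"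
    by (simp add: sum_distrib_left)
  have pk: "pcoef n k * 2 * real k ^ m = - 2 * (fact n)^2 / fact (2*n) * ((-1)^k * real ((2*n) choose (n+k)) * real k ^ e)"
    if "k \<in> {1..n}" for k
  proof -
    have "real ((2*n) choose (n+k)) = fact (2*n) / (fact (n+k) * fact (n - k))"
      using that by (subst binomial_fact) (auto simp: mult_2)
    moreover have "(fact (2*n) :: real) \<noteq> 0" by simp
    moreover have "real k \<noteq> 0" using that by simp
    ultimately show ?thesis unfolding pcoef_def using e(1) that
      by (simp add: field_simps)
  qed
  have cn: "real ((2*n) choose n) = fact (2*n) / (fact n)^2"
    by (subst binomial_fact) (auto simp: mult_2 power2_eq_square)
  have "(\<Sum>k=1..n. pcoef n k * 2 * real k ^ m)
     = - 2 * (fact n)^2 / fact (2*n) * (\<Sum>k=1..n. (-1)^k * real ((2*n) choose (n+k)) * real k ^ e)"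
    using pk by (simp add: sum_distrib_left)
  also have "(\<Sum>k=1..n. (-1)^k * real ((2*n) choose (n+k)) * real k ^ e)
     = (-1)^n * (\<Sum>k=1..n. (-1)^(n+k) * real ((2*n) choose (n+k)) * real k ^ e)"
    by (simp add: sum_distrib_left power_add mult.assoc[symmetric])
  finally have P: "(\<Sum>k=1..n. pcoef n k * 2 * real k ^ m) = - 2 * (fact n)^2 / fact (2*n) * ((-1)^n * (\<Sum>k=1..n. (-1)^(n+k) * real ((2*n) choose (n+k)) * real k ^ e))" .
  define S where "S = (\<Sum>k=1..n. (-1)^(n+k) * real ((2*n) choose (n+k)) * real k ^ e)"
  define z :: real where "z = (if e = 0 then 1 else 0)"
  have key': "(-1)^n * real ((2*n) choose n) * z + 2 * S = 0" using key unfolding S_def z_def .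
  have S: "S = - ((-1)^n) * (fact (2*n) / (fact n)^2) * z / 2" using key' unfolding cn[symmetric] by linarith
  have "(\<Sum>k=1..n. pcoef n k * 2 * real k ^ m) = ((-1)^n * (-1)^n) * z"
    unfolding P S_def[symmetric] S by (simp add: field_simps)
  also have "(-1::real)^n * (-1)^n = 1" by (simp flip: power_add)
  finally show ?thesis using e(1) unfolding z_def by simp
qed



definition pdir :: "('a::real_normed_vector \<Rightarrow> 'b::real_normed_vector) \<Rightarrow> 'a \<Rightarrow> 'a \<Rightarrow> 'b" where
  "pdir f b = (\<lambda>y. frechet_derivative f (at y) b)"

fun good :: "nat \<Rightarrow> 'a::euclidean_space set \<Rightarrow> real \<Rightarrow> ('a \<Rightarrow> 'b::real_normed_vector) \<Rightarrow> bool" where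
  "good 0 U C f \<longleftrightarrow> (\<forall>y\<in>U. norm (f y) \<le> C)"
| "good (Suc m) U C f \<longleftrightarrow> (\<forall>y\<in>U. norm (f y) \<le> C) \<and> f differentiable_on U \<and>
      (\<forall>b\<in>Basis. good m U C (pdir f b))"

lemma good_bound: "good m U C f \<Longrightarrow> y \<in> U \<Longrightarrow> norm (f y) \<le> C"
  by (cases m) auto

lemma good_mono: "good m U C f \<Longrightarrow> C \<le> C' \<Longrightarrow> good m U C' f"
  by (induction m arbitrary: f) (auto intro: order_trans)

lemma good_down: "good m U C f \<Longrightarrow> k \<le> m \<Longrightarrow> good k U C f"
proof (induction m arbitrary: f k)
  case 0 then show ?case by simp
next
  case (Suc m)
  then show ?case by (cases k) auto
qed

lemma good_cong:
  assumes "open U" "\<And>y. y \<in> U \<Longrightarrow> f y = g y" "good m U C f"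
  shows "good m U C g"
  using assms(2,3)
proof (induction m arbitrary: f g)
  case 0 then show ?case by auto
next
  case (Suc m)
  have d: "g differentiable_on U"
  proof (rule differentiable_at_imp_differentiable_on)
    fix y assume y: "y \<in> U"
    then have "f differentiable at y" using Suc.prems assms(1)
      by (simp add: differentiable_on_eq_differentiable_at)
    then show "g differentiable at y"
      unfolding differentiable_def using has_derivative_transform_within_open[OF _ assms(1) y, of f _ UNIV g] Suc.prems by blast
  qed
  have "pdir f b y = pdir g b y" if "y \<in> U" for b y
  proof -
    have "f differentiable at y" using Suc.prems that assms(1)
      by (simp add: differentiable_on_eq_differentiable_at)
    then show ?thesis unfolding pdir_def
      using frechet_derivative_transform_within_open[OF _ assms(1) that, of f g] Suc.prems by simp
  qed
  then have "good m U C (pdir g b)" if "b \<in> Basis" for b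
    using Suc.IH[of "pdir f b" "pdir g b"] Suc.prems that by auto
  then show ?case using Suc.prems d by auto
qed

lemma pdir_add:
  assumes "f differentiable at y" "g differentiable at y"
  shows "pdir (\<lambda>y. f y + g y) b y = pdir f b y + pdir g b y"
proof -
  have "((\<lambda>y. f y + g y) has_derivative (\<lambda>v. frechet_derivative f (at y) v + frechet_derivative g (at y) v)) (at y)"
    using assms by (intro has_derivative_add) (simp_all add: frechet_derivative_works[symmetric])
  then show ?thesis unfolding pdir_def by (metis frechet_derivative_at)
qed

lemma pdir_scale:
  fixes f :: "'a::real_normed_vector \<Rightarrow> real"
  assumes "f differentiable at y" "g differentiable at y"
  shows "pdir (\<lambda>y. f y *\<^sub>R g y) b y = pdir f b y *\<^sub>R g y + f y *\<^sub>R pdir g b y"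
proof -
  have "((\<lambda>y. f y *\<^sub>R g y) has_derivative (\<lambda>v. f y *\<^sub>R frechet_derivative g (at y) v + frechet_derivative f (at y) v *\<^sub>R g y)) (at y)"
    using assms by (intro has_derivative_scaleR) (simp_all add: frechet_derivative_works[symmetric])
  then show ?thesis unfolding pdir_def by (metis frechet_derivative_at add.commute)
qed

lemma pdir_inner:
  assumes "f differentiable at y"
  shows "pdir (\<lambda>y. f y \<bullet> c) b y = pdir f b y \<bullet> c"
proof -
  have "((\<lambda>y. f y \<bullet> c) has_derivative (\<lambda>v. frechet_derivative f (at y) v \<bullet> c)) (at y)"
    using assms by (intro has_derivative_inner_left) (simp_all add: frechet_derivative_works[symmetric])
  then show ?thesis unfolding pdir_def by (metis frechet_derivative_at)
qed

lemma good_diff_at: "open U \<Longrightarrow> good (Suc m) U C f \<Longrightarrow> y \<in> U \<Longrightarrow> f differentiable at y"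
  by (auto simp: differentiable_on_eq_differentiable_at)

lemma good_add:
  assumes "open U" "good m U C1 f" "good m U C2 g"
  shows "good m U (C1 + C2) (\<lambda>y. f y + g y)"
  using assms(2,3)
proof (induction m arbitrary: f g)
  case 0 then show ?case by (auto intro: norm_triangle_le add_mono)
next
  case (Suc m)
  have b: "\<forall>y\<in>U. norm (f y + g y) \<le> C1 + C2"
    using Suc.prems by (auto intro: norm_triangle_le add_mono)
  have d: "(\<lambda>y. f y + g y) differentiable_on U" using Suc.prems by (auto intro: differentiable_on_add)
  have "good m U (C1 + C2) (pdir (\<lambda>y. f y + g y) b)" if "b \<in> Basis" for b
  proof (rule good_cong[OF assms(1)])
    show "good m U (C1 + C2) (\<lambda>y. pdir f b y + pdir g b y)"
      using Suc that by auto
    show "pdir f b y + pdir g b y = pdir (\<lambda>y. f y + g y) b y" if "y \<in> U" for y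
      using pdir_add good_diff_at[OF assms(1)] Suc.prems that by metis
  qed
  then show ?case using b d by simp
qed

lemma good_zero: "0 \<le> C \<Longrightarrow> good m U C (\<lambda>y. 0)"
proof (induction m arbitrary: C)
  case 0 then show ?case by simp
next
  case (Suc m)
  have "pdir (\<lambda>y::'a. 0::'b) b = (\<lambda>y. 0)" for b unfolding pdir_def by simp
  then show ?case using Suc by simp
qed

lemma good_sum:
  assumes "open U" "finite S" "\<And>i. i \<in> S \<Longrightarrow> good m U (C i) (f i)" "\<And>i. i \<in> S \<Longrightarrow> 0 \<le> C i"
  shows "good m U (\<Sum>i\<in>S. C i) (\<lambda>y. \<Sum>i\<in>S. f i y)"
  using assms(2-4)
proof (induction S rule: finite_induct)
  case empty then show ?case by (simp add: good_zero)
next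
  case (insert x F)
  then show ?case by (simp add: good_add[OF assms(1)])
qed

lemma good_scale:
  fixes f :: "'a::euclidean_space \<Rightarrow> real"
  assumes "open U" "good m U C1 f" "good m U C2 g" "0 \<le> C1" "0 \<le> C2"
  shows "good m U (2^m * C1 * C2) (\<lambda>y. f y *\<^sub>R g y)"
  using assms(2,3)
proof (induction m arbitrary: f g)
  case 0 then show ?case by (auto intro!: mult_mono simp: assms)
next
  case (Suc m)
  have b: "\<forall>y\<in>U. norm (f y *\<^sub>R g y) \<le> 2^Suc m * C1 * C2"
  proof
    fix y assume "y \<in> U"
    then have "norm (f y *\<^sub>R g y) \<le> C1 * C2"
      using Suc.prems by (auto intro!: mult_mono simp: assms)
    also have "\<dots> \<le> 2^Suc m * C1 * C2"
    proof -
      have p: "(1::real) \<le> 2^Suc m" by (rule one_le_power) simp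
      have "1 * (C1 * C2) \<le> 2^Suc m * (C1 * C2)"
        using mult_right_mono[OF p] assms(4,5) by simp
      then show ?thesis by (simp add: mult.assoc)
    qed
    finally show "norm (f y *\<^sub>R g y) \<le> 2^Suc m * C1 * C2" .
  qed
  have d: "(\<lambda>y. f y *\<^sub>R g y) differentiable_on U" using Suc.prems by (auto intro: differentiable_on_scaleR)
  have "good m U (2^Suc m * C1 * C2) (pdir (\<lambda>y. f y *\<^sub>R g y) b)" if "b \<in> Basis" for b
  proof (rule good_cong[OF assms(1)])
    have g1: "good m U (2^m * C1 * C2) (\<lambda>y. pdir f b y *\<^sub>R g y)"
      using Suc.IH[of "pdir f b" g] Suc.prems that good_down[of "Suc m" U C2 g m] by auto
    have g2: "good m U (2^m * C1 * C2) (\<lambda>y. f y *\<^sub>R pdir g b y)"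
      using Suc.IH[of f "pdir g b"] Suc.prems that good_down[of "Suc m" U C1 f m] by auto
    show "good m U (2^Suc m * C1 * C2) (\<lambda>y. pdir f b y *\<^sub>R g y + f y *\<^sub>R pdir g b y)"
      using good_add[OF assms(1) g1 g2] by (simp add: mult_ac)
    show "pdir f b y *\<^sub>R g y + f y *\<^sub>R pdir g b y = pdir (\<lambda>y. f y *\<^sub>R g y) b y" if "y \<in> U" for y
      using pdir_scale good_diff_at[OF assms(1)] Suc.prems that by metis
  qed
  then show ?case using b d by simp
qed

lemma good_inner:
  assumes "open U" "good m U C f" "c \<in> Basis"
  shows "good m U C (\<lambda>y. f y \<bullet> c)"
  using assms(2)
proof (induction m arbitrary: f)
  case 0 then show ?case using assms(3) by (auto intro: order_trans[OF Basis_le_norm])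
next
  case (Suc m)
  have b: "\<forall>y\<in>U. norm (f y \<bullet> c) \<le> C"
    using Suc.prems assms(3) by (auto intro: order_trans[OF Basis_le_norm])
  have d: "(\<lambda>y. f y \<bullet> c) differentiable_on U" using Suc.prems
    by (auto intro!: differentiable_at_imp_differentiable_on simp: differentiable_on_eq_differentiable_at[OF assms(1)])
  have "good m U C (pdir (\<lambda>y. f y \<bullet> c) b)" if "b \<in> Basis" for b
  proof (rule good_cong[OF assms(1)])
    show "good m U C (\<lambda>y. pdir f b y \<bullet> c)" using Suc that by auto
    show "pdir f b y \<bullet> c = pdir (\<lambda>y. f y \<bullet> c) b y" if "y \<in> U" for y
      using pdir_inner good_diff_at[OF assms(1)] Suc.prems that by metis
  qed
  then show ?case using b d by simp
qed

lemma pderivs_snoc: "pderivs (vs @ [b]) f = pderivs vs (pdir f b)"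
  by (induction vs) (auto simp: pdir_def)

lemma good_of_pderivs:
  assumes "\<And>vs. set vs \<subseteq> Basis \<Longrightarrow> length vs \<le> m \<Longrightarrow>
      (\<forall>y\<in>U. norm (pderivs vs f y) \<le> M) \<and> (length vs < m \<longrightarrow> pderivs vs f differentiable_on U)"
  shows "good m U M f"
  using assms
proof (induction m arbitrary: f)
  case 0
  then show ?case using 0[of "[]"] by simp
next
  case (Suc m)
  have "good m U M (pdir f b)" if b: "b \<in> Basis" for b
  proof (rule Suc.IH)
    fix vs :: "'a list" assume "set vs \<subseteq> Basis" "length vs \<le> m"
    then show "(\<forall>y\<in>U. norm (pderivs vs (pdir f b) y) \<le> M) \<and> (length vs < m \<longrightarrow> pderivs vs (pdir f b) differentiable_on U)"
      using Suc.prems[of "vs @ [b]"] b by (simp add: pderivs_snoc)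
  qed
  then show ?case using Suc.prems[of "[]"] by simp
qed

lemma good_of_Ck_bounded:
  assumes "Ck_bounded m D f M" "U \<subseteq> D"
  shows "good m U M f"
  using assms unfolding Ck_bounded_def Ck_on_def
  by (intro good_of_pderivs) (auto intro: differentiable_on_subset)

lemma frechet_expand:
  fixes f :: "'a::euclidean_space \<Rightarrow> 'b::real_normed_vector"
  assumes "f differentiable at y"
  shows "frechet_derivative f (at y) v = (\<Sum>b\<in>Basis. (v \<bullet> b) *\<^sub>R pdir f b y)"
proof -
  have l: "linear (frechet_derivative f (at y))" using assms by (rule linear_frechet_derivative)
  have "frechet_derivative f (at y) v = frechet_derivative f (at y) (\<Sum>b\<in>Basis. (v \<bullet> b) *\<^sub>R b)"
    by (simp add: euclidean_representation)
  also have "\<dots> = (\<Sum>b\<in>Basis. (v \<bullet> b) *\<^sub>R frechet_derivative f (at y) b)"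
    using l by (simp add: linear_sum linear_scale)
  finally show ?thesis by (simp add: pdir_def)
qed

fun Gs :: "('a::euclidean_space \<Rightarrow> 'a) \<Rightarrow> nat \<Rightarrow> 'a \<Rightarrow> 'a" where
  "Gs A 0 = A"
| "Gs A (Suc j) = (\<lambda>y. \<Sum>b\<in>Basis. (A y \<bullet> b) *\<^sub>R pdir (Gs A j) b y)"

lemma good_Gs:
  fixes A :: "'a::euclidean_space \<Rightarrow> 'a"
  assumes U: "open U" and A: "good N U M A" and M: "0 \<le> M" and j: "j \<le> N"
  shows "good (N - j) U ((real DIM('a) * 2^N * M)^j * M) (Gs A j)"
  using j
proof (induction j)
  case 0 then show ?case using A by simp
next
  case (Suc j)
  define c where "c = real DIM('a) * 2^N * M"
  define K where "K = c^j * M"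
  have c0: "0 \<le> c" "0 \<le> K" unfolding c_def K_def using M by auto
  have IH: "good (Suc (N - Suc j)) U K (Gs A j)" using Suc unfolding K_def c_def
    by (simp add: Suc_diff_Suc)
  have "good (N - Suc j) U (2^(N - Suc j) * M * K) (\<lambda>y. (A y \<bullet> b) *\<^sub>R pdir (Gs A j) b y)"
    if b: "b \<in> Basis" for b
  proof (rule good_scale[OF U _ _ M c0(2)])
    show "good (N - Suc j) U M (\<lambda>y. A y \<bullet> b)"
      using good_inner[OF U good_down[OF A] b] by simp
    show "good (N - Suc j) U K (pdir (Gs A j) b)" using IH b by simp
  qed
  then have "good (N - Suc j) U (\<Sum>b\<in>(Basis::'a set). 2^(N - Suc j) * M * K) (Gs A (Suc j))"
    by (simp only: Gs.simps) (rule good_sum[OF U finite_Basis], auto simp: M c0)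
  moreover have "(\<Sum>b\<in>(Basis::'a set). 2^(N - Suc j) * M * K) \<le> c^(Suc j) * M"
  proof -
    have "(\<Sum>b\<in>(Basis::'a set). 2^(N - Suc j) * M * K) = real DIM('a) * 2^(N - Suc j) * M * K"
      by simp
    also have "\<dots> \<le> real DIM('a) * 2^N * M * K"
      using M c0 by (intro mult_right_mono mult_left_mono power_increasing) auto
    also have "\<dots> = c^(Suc j) * M" unfolding c_def K_def by (simp add: mult_ac)
    finally show ?thesis .
  qed
  ultimately show ?case unfolding c_def by (rule good_mono)
qed



lemma mvt_vec:
  fixes f :: "real \<Rightarrow> 'b::real_normed_vector"
  assumes "convex S" "\<And>x. x \<in> S \<Longrightarrow> (f has_vector_derivative f' x) (at x within S)"
    "\<And>x. x \<in> S \<Longrightarrow> norm (f' x) \<le> B" "a \<in> S" "b \<in> S"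
  shows "norm (f b - f a) \<le> B * \<bar>b - a\<bar>"
proof -
  have "norm (f b - f a) \<le> B * norm (b - a)"
  proof (rule differentiable_bound[OF assms(1), where f'="\<lambda>x h. h *\<^sub>R f' x"])
    show "(f has_derivative (\<lambda>h. h *\<^sub>R f' x)) (at x within S)" if "x \<in> S" for x
      using assms(2)[OF that] by (simp add: has_vector_derivative_def)
    show "onorm (\<lambda>h. h *\<^sub>R f' x) \<le> B" if "x \<in> S" for x
    proof (rule onorm_le)
      fix h :: real
      have "norm (h *\<^sub>R f' x) = \<bar>h\<bar> * norm (f' x)" by simp
      also have "\<dots> \<le> \<bar>h\<bar> * B" using assms(3)[OF that] by (simp add: mult_left_mono)
      finally show "norm (h *\<^sub>R f' x) \<le> B * norm h" by (simp add: mult.commute)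
    qed
  qed (use assms in auto)
  then show ?thesis by simp
qed

lemma ode_exists:
  fixes f :: "real \<Rightarrow> 'a::euclidean_space \<Rightarrow> 'a"
  assumes T: "0 < T" and r: "0 \<le> r"
    and cont: "continuous_on ({-T..T} \<times> cball x0 r) (\<lambda>(t, y). f t y)"
    and bound: "\<And>t y. t \<in> {-T..T} \<Longrightarrow> y \<in> cball x0 r \<Longrightarrow> norm (f t y) \<le> K"
    and lip: "\<And>t y z. t \<in> {-T..T} \<Longrightarrow> y \<in> cball x0 r \<Longrightarrow> z \<in> cball x0 r \<Longrightarrow> norm (f t y - f t z) \<le> L * norm (y - z)"
    and small: "T * K \<le> r" "T * L < 1" "0 \<le> L"
  shows "\<exists>\<xi>. \<xi> 0 = x0 \<and> (\<forall>t\<in>{-T..T}. \<xi> t \<in> cball x0 r \<and>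
           (\<xi> has_vector_derivative f t (\<xi> t)) (at t within {-T..T}))"
proof -
  define S :: "(real \<Rightarrow>\<^sub>C 'a) set" where "S = PiC UNIV (\<lambda>_. cball x0 r)"
  have Sc: "complete S" unfolding S_def by (intro complete_eq_closed[THEN iffD2] closed_PiC) auto
  have memS: "g \<in> S \<longleftrightarrow> (\<forall>t. g t \<in> cball x0 r)" for g unfolding S_def mem_PiC_iff by auto
  have Sne: "S \<noteq> {}"
  proof -
    have "const_bcontfun x0 \<in> S" unfolding memS using r by (simp add: const_bcontfun.rep_eq)
    then show ?thesis by auto
  qed
  define h where "h g s = f s (apply_bcontfun g s)" for g :: "real \<Rightarrow>\<^sub>C 'a" and s
  have hcont: "continuous_on {-T..T} (h g)" if "g \<in> S" for g
  proof -
    have "continuous_on {-T..T} ((\<lambda>(t, y). f t y) \<circ> (\<lambda>s. (s, apply_bcontfun g s)))"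
      using that unfolding memS
      by (intro continuous_on_compose continuous_on_subset[OF cont]) (auto intro!: continuous_intros)
    then show ?thesis by (simp add: h_def o_def)
  qed
  define P where "P g t = x0 + integral {-T..t} (h g) - integral {-T..0} (h g)" for g t
  have Pder: "((P g) has_vector_derivative h g t) (at t within {-T..T})" if "g \<in> S" "t \<in> {-T..T}" for g t
    unfolding P_def
    using integral_has_vector_derivative[OF hcont[OF that(1)] that(2)]
    by (auto intro!: derivative_eq_intros)
  have P0: "P g 0 = x0" for g unfolding P_def by simp
  have Pbd: "norm (P g t - x0) \<le> r" if "g \<in> S" "t \<in> {-T..T}" for g t
  proof -
    have "norm (P g t - P g 0) \<le> K * \<bar>t - 0\<bar>"
      by (rule mvt_vec[OF convex_real_interval(5) Pder[OF that(1)]]) (use that T in \<open>auto simp: h_def memS intro: bound\<close>)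
    also have "\<dots> \<le> K * T" using that bound[of 0 x0] T r
      by (intro mult_left_mono) (auto dest: order_trans[OF norm_ge_zero])
    finally show ?thesis using small by (simp add: P0 mult.commute)
  qed
  have Pcont: "continuous_on {-T..T} (P g)" if "g \<in> S" for g
    using Pder[OF that] has_vector_derivative_continuous continuous_on_eq_continuous_within by blast
  have Pcont': "continuous_on (cbox (-T) T) (P g)" if "g \<in> S" for g using Pcont[OF that] by simp
  define Q where "Q g = (SOME q. (\<forall>t \<in> cbox (-T) T. apply_bcontfun q t = P g t) \<and> (\<forall>t. apply_bcontfun q t = P g (clamp (-T) T t)))" for g
  have Q: "(\<forall>t \<in> cbox (-T) T. apply_bcontfun (Q g) t = P g t) \<and> (\<forall>t. apply_bcontfun (Q g) t = P g (clamp (-T) T t))" if gS: "g \<in> S" for g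
  proof -
    obtain q where "\<And>t. t \<in> cbox (-T) T \<Longrightarrow> apply_bcontfun q t = P g t" "\<And>t. apply_bcontfun q t = P g (clamp (-T) T t)"
      using continuous_on_cbox_bcontfunE[of "-T" T "P g"] Pcont'[OF gS] by blast
    then have "(\<forall>t \<in> cbox (-T) T. apply_bcontfun q t = P g t) \<and> (\<forall>t. apply_bcontfun q t = P g (clamp (-T) T t))" by auto
    then show ?thesis unfolding Q_def by (rule someI)
  qed
  have clampI: "clamp (-T) T t \<in> {-T..T}" for t using clamp_in_interval[of "-T" T t] T by simp
  have QS: "Q ` S \<subseteq> S"
  proof
    fix q assume "q \<in> Q ` S"
    then obtain g where g: "g \<in> S" "q = Q g" by auto
    show "q \<in> S" unfolding memS g(2) using Q[OF g(1)] Pbd[OF g(1) clampI]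
      by (auto simp: dist_norm norm_minus_commute)
  qed
  have Qlip: "dist (Q g) (Q g') \<le> (T * L) * dist g g'" if "g \<in> S" "g' \<in> S" for g g'
  proof (rule dist_bound)
    fix t
    let ?c = "clamp (-T) T t"
    have "norm ((P g ?c - P g' ?c) - (P g 0 - P g' 0)) \<le> (L * dist g g') * \<bar>?c - 0\<bar>"
    proof (rule mvt_vec[OF convex_real_interval(5)])
      show "((\<lambda>t. P g t - P g' t) has_vector_derivative h g s - h g' s) (at s within {-T..T})"
        if "s \<in> {-T..T}" for s using Pder[OF \<open>g \<in> S\<close> that] Pder[OF \<open>g' \<in> S\<close> that]
        by (rule has_vector_derivative_diff)
      show "norm (h g s - h g' s) \<le> L * dist g g'" if "s \<in> {-T..T}" for s
      proof -
        have "norm (h g s - h g' s) \<le> L * norm (apply_bcontfun g s - apply_bcontfun g' s)"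
          unfolding h_def using that \<open>g \<in> S\<close> \<open>g' \<in> S\<close> by (intro lip) (auto simp: memS)
        also have "\<dots> \<le> L * dist g g'"
          using dist_bounded[of g s g'] small(3) by (intro mult_left_mono) (auto simp: dist_norm)
        finally show ?thesis .
      qed
    qed (use clampI T in auto)
    also have "\<dots> \<le> (L * dist g g') * T"
      using clampI[of t] small(3) by (intro mult_left_mono) auto
    finally show "dist (Q g t) (Q g' t) \<le> (T * L) * dist g g'"
      using Q[OF that(1)] Q[OF that(2)] by (simp add: P0 dist_norm mult_ac)
  qed
  obtain g where g: "g \<in> S" "Q g = g"
    using Banach_fix[OF Sc Sne _ small(2) QS Qlip] T small by (auto intro: mult_nonneg_nonneg)
  show ?thesis
  proof (intro exI conjI ballI)
    have eq: "apply_bcontfun g t = P g t" if "t \<in> {-T..T}" for t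
      using Q[OF g(1)] g(2) that by (metis cbox_interval)
    show "apply_bcontfun g 0 = x0" using eq[of 0] T by (simp add: P0)
    fix t assume t: "t \<in> {-T..T}"
    show "apply_bcontfun g t \<in> cball x0 r" using g(1) by (simp add: memS)
    have "((P g) has_vector_derivative h g t) (at t within {-T..T})" by (rule Pder[OF g(1) t])
    then have "((apply_bcontfun g) has_vector_derivative h g t) (at t within {-T..T})"
      by (rule has_vector_derivative_transform_within[where d=1]) (use t eq in \<open>auto simp: dist_real_def\<close>)
    then show "((apply_bcontfun g) has_vector_derivative f t (apply_bcontfun g t)) (at t within {-T..T})"
      by (simp add: h_def)
  qed
qed



lemma Gs_chain:
  fixes Af :: "'a::euclidean_space \<Rightarrow> 'a"
  assumes U: "open U" and g: "good (Suc k) U C (Gs Af i)"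
    and phi: "(\<phi> has_vector_derivative \<epsilon> *\<^sub>R Af (\<phi> t)) (at t)" and pt: "\<phi> t \<in> U"
  shows "((\<lambda>t. Gs Af i (\<phi> t)) has_vector_derivative \<epsilon> *\<^sub>R Gs Af (Suc i) (\<phi> t)) (at t)"
proof -
  let ?v = "\<epsilon> *\<^sub>R Af (\<phi> t)"
  let ?g' = "frechet_derivative (Gs Af i) (at (\<phi> t))"
  have gd: "Gs Af i differentiable at (\<phi> t)" using good_diff_at[OF U g pt] .
  have "((\<lambda>t. Gs Af i (\<phi> t)) has_derivative (\<lambda>h. ?g' (h *\<^sub>R ?v))) (at t)"
    using has_derivative_compose[of \<phi> "\<lambda>h. h *\<^sub>R ?v" t UNIV "Gs Af i" ?g'] phi gd
    by (simp add: has_vector_derivative_def frechet_derivative_works)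
  moreover have "?g' (h *\<^sub>R ?v) = h *\<^sub>R ?g' ?v" for h
    using linear_frechet_derivative[OF gd] by (simp add: linear_scale)
  moreover have "?g' ?v = \<epsilon> *\<^sub>R Gs Af (Suc i) (\<phi> t)"
    by (simp add: frechet_expand[OF gd] scaleR_sum_right)
  ultimately show ?thesis by (simp add: has_vector_derivative_def)
qed

lemma vd_inner:
  assumes "(f has_vector_derivative v) F"
  shows "((\<lambda>t. f t \<bullet> b) has_real_derivative (v \<bullet> b)) F"
proof -
  have "((\<lambda>t. f t \<bullet> b) has_derivative (\<lambda>h. (h *\<^sub>R v) \<bullet> b)) F"
    using assms unfolding has_vector_derivative_def by (intro has_derivative_inner_left)
  moreover have "(\<lambda>h. (h *\<^sub>R v) \<bullet> b) = (*) (v \<bullet> b)" by (auto simp: mult.commute)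
  ultimately show ?thesis by (simp add: has_field_derivative_def)
qed

lemma odd_moment:
  assumes "1 \<le> n" "m < 2*n+1"
  shows "(\<Sum>k=1..n. pcoef n k * (real k ^ m - (- real k) ^ m)) = (if m = 1 then 1 else 0)"
proof (cases "even m")
  case True
  then have "m \<noteq> 1" by auto
  with True show ?thesis by simp
next
  case False
  then have "m < 2*n" using assms(2) by presburger
  have "(\<Sum>k=1..n. pcoef n k * (real k ^ m - (- real k) ^ m)) = (\<Sum>k=1..n. pcoef n k * 2 * real k ^ m)"
    using False by (intro sum.cong) (auto simp: power_minus_odd)
  then show ?thesis using pcoef_moment[OF assms(1) False \<open>m < 2*n\<close>] by simp
qed

lemma flow_component:
  fixes Af :: "'a::euclidean_space \<Rightarrow> 'a" and \<phi> :: "real \<Rightarrow> 'a"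
  assumes U: "open U" and n: "1 \<le> n" and A: "good (2*n) U M Af" and M: "0 \<le> M"
    and phi: "\<And>t. \<bar>t\<bar> \<le> real n \<Longrightarrow> \<phi> t \<in> U \<and> (\<phi> has_vector_derivative \<epsilon> *\<^sub>R Af (\<phi> t)) (at t)"
    and x: "\<phi> 0 = x" and b: "b \<in> Basis"
  shows "\<bar>(\<Sum>k=1..n. pcoef n k * ((\<phi> (real k) - \<phi> (- real k)) \<bullet> b)) - \<epsilon> * (Af x \<bullet> b)\<bar>
    \<le> \<bar>\<epsilon>\<bar>^(2*n+1) * ((real DIM('a) * 2^(2*n) * M)^(2*n) * M) * (\<Sum>k=1..n. \<bar>pcoef n k\<bar> * 2 * real k^(2*n+1)) / fact (2*n+1)"
proof -
  define N where "N = 2*n+1"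
  define Kmax where "Kmax = (real DIM('a) * 2^(2*n) * M)^(2*n) * M"
  define diff where "diff m t = (if m = 0 then \<phi> t \<bullet> b else \<epsilon>^m * (Gs Af (m-1) (\<phi> t) \<bullet> b))" for m t
  have D: "DERIV (diff m) t :> diff (Suc m) t" if "m < N" "\<bar>t\<bar> \<le> real n" for m t
  proof (cases m)
    case 0
    have "((\<lambda>t. \<phi> t \<bullet> b) has_real_derivative ((\<epsilon> *\<^sub>R Af (\<phi> t)) \<bullet> b)) (at t)"
      using phi[OF that(2)] by (intro vd_inner) auto
    moreover have "diff 0 = (\<lambda>t. \<phi> t \<bullet> b)" by (auto simp: diff_def)
    ultimately show ?thesis using 0 by (simp add: diff_def)
  next
    case (Suc i)
    have "good (2*n - i) U ((real DIM('a) * 2^(2*n) * M)^i * M) (Gs Af i)"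
      using good_Gs[OF U A M, of i] that Suc unfolding N_def by simp
    moreover have "2*n - i = Suc (2*n - Suc i)" using that Suc unfolding N_def by simp
    ultimately have g: "good (Suc (2*n - Suc i)) U ((real DIM('a) * 2^(2*n) * M)^i * M) (Gs Af i)" by simp
    have "((\<lambda>t. Gs Af i (\<phi> t)) has_vector_derivative \<epsilon> *\<^sub>R Gs Af (Suc i) (\<phi> t)) (at t)"
      using Gs_chain[OF U g] phi[OF that(2)] by blast
    then have "((\<lambda>t. Gs Af i (\<phi> t) \<bullet> b) has_real_derivative ((\<epsilon> *\<^sub>R Gs Af (Suc i) (\<phi> t)) \<bullet> b)) (at t)"
      by (rule vd_inner)
    then have "((\<lambda>t. \<epsilon>^m * (Gs Af i (\<phi> t) \<bullet> b)) has_real_derivative \<epsilon>^m * ((\<epsilon> *\<^sub>R Gs Af (Suc i) (\<phi> t)) \<bullet> b)) (at t)"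
      by (rule DERIV_cmult)
    moreover have "diff m = (\<lambda>t. \<epsilon>^m * (Gs Af i (\<phi> t) \<bullet> b))" using Suc by (auto simp: diff_def)
    moreover have "diff (Suc m) t = \<epsilon>^(Suc m) * (Gs Af (Suc i) (\<phi> t) \<bullet> b)"
      using Suc by (simp add: diff_def del: Gs.simps)
    moreover have "\<epsilon>^m * ((\<epsilon> *\<^sub>R v) \<bullet> b) = \<epsilon>^(Suc m) * (v \<bullet> b)" for v :: 'a by simp
    ultimately show ?thesis by metis
  qed
  define P where "P s = (\<Sum>m<N. diff m 0 / fact m * s ^ m)" for s
  have Rb: "\<bar>\<phi> s \<bullet> b - P s\<bar> \<le> \<bar>\<epsilon>\<bar>^N * Kmax * \<bar>s\<bar>^N / fact N" if "\<bar>s\<bar> \<le> real n" for s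
  proof -
    have "\<forall>m t. m < N \<and> \<bar>t\<bar> \<le> \<bar>s\<bar> \<longrightarrow> DERIV (diff m) t :> diff (Suc m) t"
      using D that by auto
    from Maclaurin_bi_le[OF refl this] obtain t where t: "\<bar>t\<bar> \<le> \<bar>s\<bar>" "diff 0 s = P s + diff N t / fact N * s ^ N"
      unfolding P_def by blast
    have "\<phi> t \<in> U" using phi t(1) that by force
    then have "norm (Gs Af (2*n) (\<phi> t)) \<le> Kmax"
      using good_bound[OF good_Gs[OF U A M, of "2*n"]] unfolding Kmax_def by simp
    then have "\<bar>Gs Af (2*n) (\<phi> t) \<bullet> b\<bar> \<le> Kmax" using Basis_le_norm[OF b] order_trans by blast
    then have "\<bar>diff N t\<bar> \<le> \<bar>\<epsilon>\<bar>^N * Kmax"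
      unfolding diff_def N_def by (simp add: abs_mult power_abs mult_left_mono)
    then have R: "\<bar>diff N t / fact N * s ^ N\<bar> \<le> \<bar>\<epsilon>\<bar>^N * Kmax * \<bar>s\<bar>^N / fact N"
      by (simp add: abs_mult power_abs divide_right_mono mult_right_mono)
    have "diff 0 s = \<phi> s \<bullet> b" by (simp add: diff_def)
    then have "\<phi> s \<bullet> b - P s = diff N t / fact N * s ^ N" using t(2) by simp
    then show ?thesis using R by simp
  qed
  have Psum: "(\<Sum>k=1..n. pcoef n k * (P (real k) - P (- real k))) = \<epsilon> * (Af x \<bullet> b)"
  proof -
    have "(\<Sum>k=1..n. pcoef n k * (P (real k) - P (- real k)))
        = (\<Sum>k=1..n. \<Sum>m<N. diff m 0 / fact m * (pcoef n k * (real k ^ m - (- real k) ^ m)))"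
      unfolding P_def sum_subtractf[symmetric] sum_distrib_left
      by (intro sum.cong refl) (simp add: right_diff_distrib mult_ac)
    also have "\<dots> = (\<Sum>m<N. diff m 0 / fact m * (\<Sum>k=1..n. pcoef n k * (real k ^ m - (- real k) ^ m)))"
      by (subst sum.swap) (simp add: sum_distrib_left)
    also have "\<dots> = (\<Sum>m<N. if m = 1 then diff m 0 / fact m else 0)"
      using odd_moment[OF n] unfolding N_def by (intro sum.cong refl) simp
    also have "\<dots> = diff 1 0" using n unfolding N_def by (simp add: sum.delta)
    also have "\<dots> = \<epsilon> * (Af x \<bullet> b)" by (simp add: diff_def x)
    finally show ?thesis .
  qed
  have "(\<Sum>k=1..n. pcoef n k * ((\<phi> (real k) - \<phi> (- real k)) \<bullet> b)) - \<epsilon> * (Af x \<bullet> b)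
      = (\<Sum>k=1..n. pcoef n k * ((\<phi> (real k) \<bullet> b - P (real k)) - (\<phi> (- real k) \<bullet> b - P (- real k))))"
    unfolding Psum[symmetric] sum_subtractf[symmetric]
    by (intro sum.cong refl) (simp add: inner_diff_left right_diff_distrib)
  also have "\<bar>\<dots>\<bar> \<le> (\<Sum>k=1..n. \<bar>pcoef n k\<bar> * (2 * (\<bar>\<epsilon>\<bar>^N * Kmax * real k^N / fact N)))"
  proof (rule order_trans[OF sum_abs], rule sum_mono)
    fix k assume k: "k \<in> {1..n}"
    have "\<bar>(\<phi> (real k) \<bullet> b - P (real k)) - (\<phi> (- real k) \<bullet> b - P (- real k))\<bar> \<le> 2 * (\<bar>\<epsilon>\<bar>^N * Kmax * real k^N / fact N)"
      using Rb[of "real k"] Rb[of "- real k"] k by simp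
    from mult_left_mono[OF this abs_ge_zero[of "pcoef n k"]] show "\<bar>pcoef n k * ((\<phi> (real k) \<bullet> b - P (real k)) - (\<phi> (- real k) \<bullet> b - P (- real k)))\<bar>
        \<le> \<bar>pcoef n k\<bar> * (2 * (\<bar>\<epsilon>\<bar>^N * Kmax * real k^N / fact N))"
      by (simp add: abs_mult)
  qed
  also have "\<dots> = \<bar>\<epsilon>\<bar>^N * Kmax * (\<Sum>k=1..n. \<bar>pcoef n k\<bar> * 2 * real k^N) / fact N"
    by (simp add: sum_distrib_left sum_divide_distrib mult_ac)
  finally show ?thesis unfolding N_def Kmax_def .
qed



lemma frechet_norm_bound:
  fixes f :: "'a::euclidean_space \<Rightarrow> 'b::real_normed_vector"
  assumes "f differentiable at p" "\<And>b. b \<in> Basis \<Longrightarrow> norm (pdir f b p) \<le> M"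
  shows "norm (frechet_derivative f (at p) v) \<le> real DIM('a) * M * norm v"
proof -
  have "norm (frechet_derivative f (at p) v) = norm (\<Sum>b\<in>Basis. (v \<bullet> b) *\<^sub>R pdir f b p)"
    by (simp add: frechet_expand[OF assms(1)])
  also have "\<dots> \<le> (\<Sum>b\<in>(Basis::'a set). norm v * M)"
  proof (rule order_trans[OF norm_sum sum_mono])
    fix b :: 'a assume b: "b \<in> Basis"
    have "norm ((v \<bullet> b) *\<^sub>R pdir f b p) = \<bar>v \<bullet> b\<bar> * norm (pdir f b p)" by simp
    also have "\<dots> \<le> norm v * M"
      using assms(2)[OF b] Basis_le_norm[OF b, of v] by (intro mult_mono) auto
    finally show "norm ((v \<bullet> b) *\<^sub>R pdir f b p) \<le> norm v * M" .
  qed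
  also have "\<dots> = real DIM('a) * M * norm v" by simp
  finally show ?thesis .
qed

lemma lip_from_good:
  fixes f :: "'a::euclidean_space \<Rightarrow> 'b::real_normed_vector"
  assumes U: "open U" and S: "convex S" "S \<subseteq> U" and g: "good (Suc k) U M f" and y: "y \<in> S" and z: "z \<in> S"
  shows "norm (f y - f z) \<le> (real DIM('a) * M) * norm (y - z)"
proof (rule differentiable_bound[OF S(1) _ _ y z])
  fix p assume p: "p \<in> S"
  then have pU: "p \<in> U" using S by auto
  have d: "f differentiable at p" using good_diff_at[OF U g pU] .
  show "(f has_derivative frechet_derivative f (at p)) (at p within S)"
    using d by (simp add: frechet_derivative_works has_derivative_at_withinI)
  show "onorm (frechet_derivative f (at p)) \<le> real DIM('a) * M"
  proof (rule onorm_le)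
    fix v
    show "norm (frechet_derivative f (at p) v) \<le> real DIM('a) * M * norm v"
    proof (rule frechet_norm_bound[OF d])
      fix b :: 'a assume "b \<in> Basis"
      then show "norm (pdir f b p) \<le> M" using g pU by (auto intro: good_bound)
    qed
  qed
qed

lemma lip_B:
  fixes g :: "real \<times> 'a::euclidean_space \<Rightarrow> 'b::real_normed_vector"
  assumes D: "open D" and S: "convex S" "S \<subseteq> D" and m: "1 \<le> m"
    and Ck: "Ck_bounded m (UNIV \<times> D) g M" and y: "y \<in> S" and z: "z \<in> S"
  shows "norm (g (t, y) - g (t, z)) \<le> (real DIM(real \<times> 'a) * M) * norm (y - z)"
proof (rule differentiable_bound[OF S(1) _ _ y z, where f'="\<lambda>p h. frechet_derivative g (at (t, p)) (0, h)"])
  have op: "open (UNIV \<times> D)" using D by (simp add: open_Times)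
  fix p assume p: "p \<in> S"
  then have pD: "(t, p) \<in> UNIV \<times> D" using S by auto
  have "g differentiable_on (UNIV \<times> D)"
    using Ck m unfolding Ck_bounded_def Ck_on_def by (metis empty_subsetI list.size(3) pderivs.simps(1) set_empty less_le_trans zero_less_one)
  then have d: "g differentiable at (t, p)" using differentiable_on_eq_differentiable_at[OF op] pD by blast
  have "((\<lambda>p. g (t, p)) has_derivative (\<lambda>h. frechet_derivative g (at (t, p)) (0, h))) (at p)"
  proof -
    have "((\<lambda>p. (t, p)) has_derivative (\<lambda>h. (0, h))) (at p)"
      by (auto intro!: derivative_eq_intros)
    from has_derivative_compose[OF this d[unfolded frechet_derivative_works]] show ?thesis by simp
  qed
  then show "((\<lambda>p. g (t, p)) has_derivative (\<lambda>h. frechet_derivative g (at (t, p)) (0, h))) (at p within S)"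
    by (rule has_derivative_at_withinI)
  show "onorm (\<lambda>h. frechet_derivative g (at (t, p)) (0, h)) \<le> real DIM(real \<times> 'a) * M"
  proof (rule onorm_le)
    fix h :: 'a
    have "norm (frechet_derivative g (at (t, p)) (0, h)) \<le> real DIM(real \<times> 'a) * M * norm (0::real, h)"
    proof (rule frechet_norm_bound[OF d])
      fix b :: "real \<times> 'a" assume b: "b \<in> Basis"
      have "norm (pderivs [b] g (t, p)) \<le> M"
      proof -
        have "\<forall>vs. set vs \<subseteq> Basis \<longrightarrow> length vs \<le> m \<longrightarrow> (\<forall>x\<in>UNIV \<times> D. norm (pderivs vs g x) \<le> M)"
          using Ck unfolding Ck_bounded_def by blast
        then show ?thesis using b pD m by (metis empty_subsetI insert_subset list.set(1) list.set(2) list.size(3) list.size(4) add_0 le_numeral_extra(4) One_nat_def)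
      qed
      then show "norm (pdir g b (t, p)) \<le> M" by (simp add: pdir_def)
    qed
    then show "norm (frechet_derivative g (at (t, p)) (0, h)) \<le> real DIM(real \<times> 'a) * M * norm h"
      by (simp add: norm_Pair)
  qed
qed

lemma periodic_shift:
  assumes "\<forall>\<tau>. \<forall>x\<in>D. Y (\<tau> + 1) x e = Y \<tau> x e" "x \<in> D"
  shows "Y (\<tau> + real j) x e = Y \<tau> x e" "Y (\<tau> - real j) x e = Y \<tau> x e"
proof -
  show "Y (\<tau> + real j) x e = Y \<tau> x e" for \<tau>
  proof (induction j)
    case (Suc j)
    have "Y (\<tau> + real (Suc j)) x e = Y ((\<tau> + real j) + 1) x e" by (simp add: algebra_simps)
    then show ?case using assms Suc by simp
  qed simp
  show "Y (\<tau> - real j) x e = Y \<tau> x e" for \<tau>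
  proof (induction j arbitrary: \<tau>)
    case (Suc j)
    have "Y (\<tau> - real (Suc j)) x e = Y ((\<tau> - real (Suc j)) + 1) x e" using assms by metis
    also have "(\<tau> - real (Suc j)) + 1 = \<tau> - real j" by simp
    finally show ?case using Suc by simp
  qed simp
qed

lemma shift_step:
  fixes \<xi> :: "real \<Rightarrow> 'a::euclidean_space"
  assumes susp: "suspension D F Y e"
    and sub: "{a..a+1} \<subseteq> {-T..T}"
    and sol: "\<And>t. t \<in> {-T..T} \<Longrightarrow> (\<xi> has_vector_derivative e *\<^sub>R Y t (\<xi> t) e) (at t within {-T..T})"
    and inD: "\<And>t. t \<in> {a..a+1} \<Longrightarrow> \<xi> t \<in> D"
    and per: "\<And>s y. y \<in> D \<Longrightarrow> Y (s + a) y e = Y s y e"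
  shows "\<xi> (a + 1) = F e (\<xi> a)"
proof -
  define \<eta> where "\<eta> s = \<xi> (s + a)" for s
  have "\<eta> 1 = F e (\<xi> a)"
  proof -
    have "\<forall>\<xi>'. \<xi>' 0 = \<xi> a \<and> (\<forall>t\<in>{0..1}. \<xi>' t \<in> D \<and> (\<xi>' has_vector_derivative (e *\<^sub>R Y t (\<xi>' t) e)) (at t within {0..1})) \<longrightarrow> \<xi>' 1 = F e (\<xi> a)"
      using susp inD[of a] sub unfolding suspension_def by auto
    moreover have "\<eta> 0 = \<xi> a" by (simp add: \<eta>_def)
    moreover have "\<forall>t\<in>{0..1}. \<eta> t \<in> D \<and> (\<eta> has_vector_derivative (e *\<^sub>R Y t (\<eta> t) e)) (at t within {0..1})"
    proof
      fix t :: real assume t: "t \<in> {0..1}"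
      have ta: "t + a \<in> {a..a+1}" using t by auto
      show "\<eta> t \<in> D \<and> (\<eta> has_vector_derivative (e *\<^sub>R Y t (\<eta> t) e)) (at t within {0..1})"
      proof
        show "\<eta> t \<in> D" using inD[OF ta] by (simp add: \<eta>_def)
        have d1: "((\<lambda>s. s + a) has_vector_derivative 1) (at t within {0..1})"
          by (auto intro!: derivative_eq_intros)
        have img: "(\<lambda>s. s + a) ` {0..1} \<subseteq> {-T..T}" using sub by auto
        have d2: "(\<xi> has_vector_derivative e *\<^sub>R Y (t + a) (\<xi> (t + a)) e) (at (t + a) within (\<lambda>s. s + a) ` {0..1})"
          using has_vector_derivative_within_subset[OF sol img] ta sub by auto
        have "((\<xi> \<circ> (\<lambda>s. s + a)) has_vector_derivative (1 *\<^sub>R (e *\<^sub>R Y (t + a) (\<xi> (t + a)) e))) (at t within {0..1})"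
          by (rule vector_diff_chain_within[OF d1 d2])
        moreover have "Y (t + a) (\<xi> (t + a)) e = Y t (\<eta> t) e"
          using per[OF inD[OF ta]] by (simp add: \<eta>_def)
        moreover have "\<eta> = (\<lambda>s. \<xi> (s + a))" by (simp add: \<eta>_def fun_eq_iff)
        ultimately show "(\<eta> has_vector_derivative (e *\<^sub>R Y t (\<eta> t) e)) (at t within {0..1})"
          by (simp add: o_def)
      qed
    qed
    ultimately show ?thesis by blast
  qed
  then show ?thesis by (simp add: \<eta>_def add.commute)
qed



lemma core:
  fixes D :: "'a::euclidean_space set"
    and F :: "real \<Rightarrow> 'a \<Rightarrow> 'a"
    and Y B :: "real \<Rightarrow> 'a \<Rightarrow> real \<Rightarrow> 'a"
    and A :: "'a \<Rightarrow> real \<Rightarrow> 'a"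
    and n :: nat and \<epsilon> M r :: real
  assumes D: "open D" and n: "1 \<le> n"
    and eps: "0 < \<bar>\<epsilon>\<bar>" "\<bar>\<epsilon>\<bar> \<le> 1"
    and inj: "inj_on (F \<epsilon>) D"
    and susp: "suspension D F Y \<epsilon>"
    and split: "\<forall>\<tau>. \<forall>y\<in>D. Y \<tau> y \<epsilon> = A y \<epsilon> + \<epsilon> ^ (2 * n) *\<^sub>R B \<tau> y \<epsilon>"
    and CA: "Ck_bounded (2 * n) D (\<lambda>y. A y \<epsilon>) M"
    and CB: "Ck_bounded (2 * n) (UNIV \<times> D) (\<lambda>(\<tau>, y). B \<tau> y \<epsilon>) M"
    and M: "0 \<le> M"
    and r: "0 < r" "ball x (2 * r) \<subseteq> D"
    and small: "(real n + 1) * \<bar>\<epsilon>\<bar> * (2 * M + real DIM('a) * M + real DIM(real \<times> 'a) * M + 1) * 4 \<le> min r 1"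
  shows "iterates_defined D F n \<epsilon> x \<and>
         norm (A x \<epsilon> - interp_field D F n \<epsilon> x) \<le>
           (real DIM('a) * (((real DIM('a) * 2^(2*n) * M)^(2*n) * M) * (\<Sum>k=1..n. \<bar>pcoef n k\<bar> * 2 * real k^(2*n+1)) / fact (2*n+1))
            + 4 * (real n + 1) * M * (\<Sum>k=1..n. \<bar>pcoef n k\<bar>)) * \<epsilon> ^ (2 * n)"
proof -
  define T where "T = real n + 1"
  define d where "d = real DIM('a)"
  define dp where "dp = real DIM(real \<times> 'a)"
  define LA where "LA = d * M"
  define LB where "LB = dp * M"
  define U where "U = ball x (2 * r)"
  define Cb where "Cb = cball x r"
  define Af where "Af y = A y \<epsilon>" for y
  define C1 where "C1 = ((real DIM('a) * 2^(2*n) * M)^(2*n) * M) * (\<Sum>k=1..n. \<bar>pcoef n k\<bar> * 2 * real k^(2*n+1)) / fact (2*n+1)"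
  have T0: "0 < T" unfolding T_def by simp
  have LA0: "0 \<le> LA" "0 \<le> LB" unfolding LA_def LB_def d_def dp_def using M by auto
  have oU: "open U" unfolding U_def by simp
  have CbU: "Cb \<subseteq> U" unfolding Cb_def U_def using r by auto
  have UD: "U \<subseteq> D" unfolding U_def using r by simp
  have CbD: "Cb \<subseteq> D" using CbU UD by simp
  have xCb: "x \<in> Cb" unfolding Cb_def using r by simp
  have cvx: "convex Cb" unfolding Cb_def by simp
  have gA: "good (2*n) U M Af" unfolding Af_def by (rule good_of_Ck_bounded[OF CA UD])
  have gA1: "good (Suc (2*n - 1)) U M Af" using gA n by (metis Suc_diff_1 mult_pos_pos pos2 less_le_trans zero_less_one)
  have lipA: "norm (Af y - Af z) \<le> LA * norm (y - z)" if "y \<in> Cb" "z \<in> Cb" for y z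
    using lip_from_good[OF oU cvx CbU gA1 that] unfolding LA_def d_def by simp
  have lipB: "norm (B t y \<epsilon> - B t z \<epsilon>) \<le> LB * norm (y - z)" if "y \<in> Cb" "z \<in> Cb" for t y z
    using lip_B[OF D cvx CbD _ CB that, of t] n unfolding LB_def dp_def by simp
  have bA: "norm (Af y) \<le> M" if "y \<in> Cb" for y using good_bound[OF gA] that CbU by auto
  have bB: "norm (B t y \<epsilon>) \<le> M" if "y \<in> D" for t y
  proof -
    have "\<forall>vs. set vs \<subseteq> Basis \<longrightarrow> length vs \<le> 2*n \<longrightarrow> (\<forall>p\<in>UNIV \<times> D. norm (pderivs vs (\<lambda>(\<tau>, y). B \<tau> y \<epsilon>) p) \<le> M)"
      using CB unfolding Ck_bounded_def by blast
    from this[rule_format, of "[]" "(t, y)"] that show ?thesis by simp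
  qed
  have e2n: "\<bar>\<epsilon>\<bar>^(2*n) \<le> 1" using eps by (simp add: power_le_one)
  have q0: "0 \<le> T * \<bar>\<epsilon>\<bar>" using T0 by simp
  have sm1: "T * \<bar>\<epsilon>\<bar> * (2*M) \<le> r"
  proof -
    have "T * \<bar>\<epsilon>\<bar> * (2*M) * 4 \<le> T * \<bar>\<epsilon>\<bar> * (2 * M + LA + LB + 1) * 4"
      using q0 LA0 by (intro mult_right_mono mult_left_mono) auto
    also have "\<dots> \<le> min r 1" using small unfolding T_def LA_def LB_def d_def dp_def by simp
    finally show ?thesis using M q0 by (smt (verit) mult_nonneg_nonneg)
  qed
  have sm2: "T * (\<bar>\<epsilon>\<bar> * (LA + LB)) \<le> 1/4"
  proof -
    have "T * \<bar>\<epsilon>\<bar> * (LA + LB) * 4 \<le> T * \<bar>\<epsilon>\<bar> * (2 * M + LA + LB + 1) * 4"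
      using q0 LA0 M by (intro mult_right_mono mult_left_mono) auto
    also have "\<dots> \<le> min r 1" using small unfolding T_def LA_def LB_def d_def dp_def by simp
    finally show ?thesis by (simp add: mult.assoc)
  qed
  have sm3: "T * \<bar>\<epsilon>\<bar> * LA \<le> 1/4"
  proof -
    have "T * \<bar>\<epsilon>\<bar> * LA \<le> T * \<bar>\<epsilon>\<bar> * (LA + LB)" using q0 LA0 by (intro mult_left_mono) auto
    then show ?thesis using sm2 by (simp only: mult.assoc)
  qed
  have cAf: "continuous_on U Af"
    using gA1 by (auto intro: differentiable_imp_continuous_on)
  have cB: "continuous_on (UNIV \<times> D) (\<lambda>(\<tau>, y). B \<tau> y \<epsilon>)"
    using CB unfolding Ck_bounded_def Ck_on_def by (metis empty_subsetI list.size(3) pderivs.simps(1) set_empty zero_le)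
  have cAf2: "continuous_on ({-T..T} \<times> Cb) (\<lambda>p. Af (snd p))"
    by (rule continuous_on_compose2[OF cAf continuous_on_snd]) (use CbU in auto)
  have cB2: "continuous_on ({-T..T} \<times> Cb) (\<lambda>p. B (fst p) (snd p) \<epsilon>)"
  proof -
    have "continuous_on ({-T..T} \<times> Cb) (\<lambda>(\<tau>, y). B \<tau> y \<epsilon>)"
      by (rule continuous_on_subset[OF cB]) (use CbD in auto)
    then show ?thesis by (simp add: case_prod_beta)
  qed
  have contY: "continuous_on ({-T..T} \<times> Cb) (\<lambda>(t, y). \<epsilon> *\<^sub>R Y t y \<epsilon>)"
  proof (rule continuous_on_eq)
    show "continuous_on ({-T..T} \<times> Cb) (\<lambda>p. \<epsilon> *\<^sub>R (Af (snd p) + \<epsilon> ^ (2 * n) *\<^sub>R B (fst p) (snd p) \<epsilon>))"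
      by (intro continuous_intros cAf2 cB2)
    show "\<epsilon> *\<^sub>R (Af (snd p) + \<epsilon> ^ (2 * n) *\<^sub>R B (fst p) (snd p) \<epsilon>) = (\<lambda>(t, y). \<epsilon> *\<^sub>R Y t y \<epsilon>) p"
      if "p \<in> {-T..T} \<times> Cb" for p using that split CbD by (auto simp: Af_def case_prod_beta)
  qed
  have contA: "continuous_on ({-T..T} \<times> Cb) (\<lambda>(t, y). \<epsilon> *\<^sub>R Af y)"
    using cAf2 by (simp add: case_prod_beta continuous_intros)
  obtain \<xi> where xi: "\<xi> 0 = x" "\<And>t. t \<in> {-T..T} \<Longrightarrow> \<xi> t \<in> Cb \<and> (\<xi> has_vector_derivative \<epsilon> *\<^sub>R Y t (\<xi> t) \<epsilon>) (at t within {-T..T})"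
  proof -
    have "\<exists>\<xi>. \<xi> 0 = x \<and> (\<forall>t\<in>{-T..T}. \<xi> t \<in> cball x r \<and> (\<xi> has_vector_derivative \<epsilon> *\<^sub>R Y t (\<xi> t) \<epsilon>) (at t within {-T..T}))"
    proof (rule ode_exists[OF T0 _ contY[unfolded Cb_def], where K="\<bar>\<epsilon>\<bar> * (2*M)" and L="\<bar>\<epsilon>\<bar> * (LA + LB)"])
      show "0 \<le> r" using r by simp
      show "norm (\<epsilon> *\<^sub>R Y t y \<epsilon>) \<le> \<bar>\<epsilon>\<bar> * (2 * M)" if "t \<in> {-T..T}" "y \<in> cball x r" for t y
      proof -
        have yD: "y \<in> D" "y \<in> Cb" using that CbD unfolding Cb_def by auto
        have "norm (Y t y \<epsilon>) \<le> norm (Af y) + \<bar>\<epsilon>\<bar>^(2*n) * norm (B t y \<epsilon>)"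
          using split yD by (simp add: Af_def norm_triangle_le power_abs)
        also have "\<dots> \<le> M + 1 * M"
          using bA[OF yD(2)] bB[OF yD(1)] e2n by (intro add_mono mult_mono) auto
        finally show ?thesis by (simp add: mult_left_mono)
      qed
      show "norm (\<epsilon> *\<^sub>R Y t y \<epsilon> - \<epsilon> *\<^sub>R Y t z \<epsilon>) \<le> \<bar>\<epsilon>\<bar> * (LA + LB) * norm (y - z)"
        if "t \<in> {-T..T}" "y \<in> cball x r" "z \<in> cball x r" for t y z
      proof -
        have yD: "y \<in> D" "y \<in> Cb" "z \<in> D" "z \<in> Cb" using that CbD unfolding Cb_def by auto
        have "Y t y \<epsilon> - Y t z \<epsilon> = (Af y - Af z) + \<epsilon>^(2*n) *\<^sub>R (B t y \<epsilon> - B t z \<epsilon>)"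
          using split yD by (simp add: Af_def algebra_simps)
        then have "norm (Y t y \<epsilon> - Y t z \<epsilon>) \<le> norm (Af y - Af z) + \<bar>\<epsilon>\<bar>^(2*n) * norm (B t y \<epsilon> - B t z \<epsilon>)"
          by (simp add: norm_triangle_le power_abs)
        also have "\<dots> \<le> LA * norm (y - z) + 1 * (LB * norm (y - z))"
          using lipA[OF yD(2,4)] lipB[OF yD(2,4)] e2n by (intro add_mono mult_mono) auto
        finally have "norm (Y t y \<epsilon> - Y t z \<epsilon>) \<le> (LA + LB) * norm (y - z)" by (simp add: algebra_simps)
        then have "\<bar>\<epsilon>\<bar> * norm (Y t y \<epsilon> - Y t z \<epsilon>) \<le> \<bar>\<epsilon>\<bar> * ((LA + LB) * norm (y - z))"
          by (simp add: mult_left_mono)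
        then show ?thesis by (simp add: scaleR_diff_right[symmetric] mult.assoc)
      qed
      show "T * (\<bar>\<epsilon>\<bar> * (2 * M)) \<le> r" using sm1 by (simp add: mult.assoc)
      show "T * (\<bar>\<epsilon>\<bar> * (LA + LB)) < 1" using sm2 by simp
      show "0 \<le> \<bar>\<epsilon>\<bar> * (LA + LB)" using LA0 by simp
    qed
    then show ?thesis using that unfolding Cb_def by blast
  qed
  obtain \<phi> where phi: "\<phi> 0 = x" "\<And>t. t \<in> {-T..T} \<Longrightarrow> \<phi> t \<in> Cb \<and> (\<phi> has_vector_derivative \<epsilon> *\<^sub>R Af (\<phi> t)) (at t within {-T..T})"
  proof -
    have "\<exists>\<phi>. \<phi> 0 = x \<and> (\<forall>t\<in>{-T..T}. \<phi> t \<in> cball x r \<and> (\<phi> has_vector_derivative \<epsilon> *\<^sub>R Af (\<phi> t)) (at t within {-T..T}))"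
    proof (rule ode_exists[OF T0 _ contA[unfolded Cb_def], where K="\<bar>\<epsilon>\<bar> * (2*M)" and L="\<bar>\<epsilon>\<bar> * (LA + LB)"])
      show "0 \<le> r" using r by simp
      show "norm (\<epsilon> *\<^sub>R Af y) \<le> \<bar>\<epsilon>\<bar> * (2 * M)" if "t \<in> {-T..T}" "y \<in> cball x r" for t y
        using bA[of y] that M unfolding Cb_def by (simp add: mult_left_mono)
      show "norm (\<epsilon> *\<^sub>R Af y - \<epsilon> *\<^sub>R Af z) \<le> \<bar>\<epsilon>\<bar> * (LA + LB) * norm (y - z)"
        if "t \<in> {-T..T}" "y \<in> cball x r" "z \<in> cball x r" for t y z
      proof -
        have "norm (Af y - Af z) \<le> (LA + LB) * norm (y - z)"
          using lipA[of y z] that LA0 unfolding Cb_def by (smt (verit) mult_right_mono norm_ge_zero)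
        then show ?thesis by (simp add: scaleR_diff_right[symmetric] mult.assoc mult_left_mono)
      qed
      show "T * (\<bar>\<epsilon>\<bar> * (2 * M)) \<le> r" using sm1 by (simp add: mult.assoc)
      show "T * (\<bar>\<epsilon>\<bar> * (LA + LB)) < 1" using sm2 by simp
      show "0 \<le> \<bar>\<epsilon>\<bar> * (LA + LB)" using LA0 by simp
    qed
    then show ?thesis using that unfolding Cb_def by blast
  qed
  have nT: "real n < T" unfolding T_def by simp
  have per: "\<forall>\<tau>. \<forall>y\<in>D. Y (\<tau> + 1) y \<epsilon> = Y \<tau> y \<epsilon>" using susp unfolding suspension_def by blast
  have xisol: "\<And>t. t \<in> {-T..T} \<Longrightarrow> (\<xi> has_vector_derivative \<epsilon> *\<^sub>R Y t (\<xi> t) \<epsilon>) (at t within {-T..T})"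
    using xi by blast
  have xiD: "\<xi> t \<in> D" if "t \<in> {-T..T}" for t using xi(2)[OF that] CbD by auto
  have fw: "(F \<epsilon> ^^ j) x = \<xi> (real j)" if "j \<le> n" for j
    using that
  proof (induction j)
    case 0 then show ?case using xi(1) by simp
  next
    case (Suc j)
    have sub: "{real j..real j+1} \<subseteq> {-T..T}" using Suc.prems unfolding T_def by auto
    have "\<xi> (real j + 1) = F \<epsilon> (\<xi> (real j))"
      by (rule shift_step[OF susp sub xisol xiD]) (use sub periodic_shift(1)[where Y=Y and D=D and e=\<epsilon>, OF per] in auto)
    then show ?case using Suc by (simp add: add.commute)
  qed
  have bstep: "F \<epsilon> (\<xi> (- real (Suc j))) = \<xi> (- real j)" if "Suc j \<le> n" for j
  proof -
    have sub: "{- real (Suc j)..- real (Suc j)+1} \<subseteq> {-T..T}" using that unfolding T_def by auto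
    have "\<xi> (- real (Suc j) + 1) = F \<epsilon> (\<xi> (- real (Suc j)))"
    proof (rule shift_step[OF susp sub xisol xiD])
      show "Y (s + - real (Suc j)) y \<epsilon> = Y s y \<epsilon>" if "y \<in> D" for s y
        using periodic_shift(2)[where Y=Y and D=D and e=\<epsilon> and \<tau>=s and j="Suc j", OF per that] by (simp add: algebra_simps)
    qed (use sub in auto)
    then show ?thesis by simp
  qed
  have bw: "(Finv D F \<epsilon> ^^ j) x = \<xi> (- real j)" if "j \<le> n" for j
    using that
  proof (induction j)
    case 0 then show ?case using xi(1) by simp
  next
    case (Suc j)
    have "- real (Suc j) \<in> {-T..T}" using Suc.prems unfolding T_def by auto
    then have inD: "\<xi> (- real (Suc j)) \<in> D" by (rule xiD)
    have "(Finv D F \<epsilon> ^^ Suc j) x = inv_into D (F \<epsilon>) (F \<epsilon> (\<xi> (- real (Suc j))))"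
      using Suc bstep[OF Suc.prems] by (simp add: Finv_def)
    also have "\<dots> = \<xi> (- real (Suc j))" using inv_into_f_f[OF inj inD] .
    finally show ?case .
  qed
  have itdef: "iterates_defined D F n \<epsilon> x"
    unfolding iterates_defined_def
  proof (intro allI impI conjI)
    fix k assume k: "k < n"
    show "(F \<epsilon> ^^ k) x \<in> D" using fw[of k] k xiD[of "real k"] unfolding T_def by auto
    have "- real (Suc k) \<in> {-T..T}" using k unfolding T_def by auto
    then have "\<xi> (- real (Suc k)) \<in> D" by (rule xiD)
    then have "F \<epsilon> (\<xi> (- real (Suc k))) \<in> F \<epsilon> ` D" by (rule imageI)
    then show "(Finv D F \<epsilon> ^^ k) x \<in> F \<epsilon> ` D" using bw[of k] k bstep[of k] by simp
  qed
  define e where "e t = \<xi> t - \<phi> t" for t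
  have de: "(e has_vector_derivative (\<epsilon> *\<^sub>R Y t (\<xi> t) \<epsilon> - \<epsilon> *\<^sub>R Af (\<phi> t))) (at t within {-T..T})"
    if "t \<in> {-T..T}" for t
    unfolding e_def using xi(2)[OF that] phi(2)[OF that] by (intro has_vector_derivative_diff) auto
  have ce: "continuous_on {-T..T} e"
    using de has_vector_derivative_continuous continuous_on_eq_continuous_within by blast
  obtain tm where tm: "tm \<in> {-T..T}" "\<And>t. t \<in> {-T..T} \<Longrightarrow> norm (e t) \<le> norm (e tm)"
  proof -
    have "continuous_on {-T..T} (\<lambda>t. norm (e t))" using ce by (rule continuous_on_norm)
    then have "\<exists>x\<in>{-T..T}. \<forall>y\<in>{-T..T}. norm (e y) \<le> norm (e x)"
      using continuous_attains_sup[of "{-T..T}" "\<lambda>t. norm (e t)"] T0 by auto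
    then show ?thesis using that by blast
  qed
  define E where "E = norm (e tm)"
  have dbound: "norm (\<epsilon> *\<^sub>R Y t (\<xi> t) \<epsilon> - \<epsilon> *\<^sub>R Af (\<phi> t)) \<le> \<bar>\<epsilon>\<bar> * (LA * E + \<bar>\<epsilon>\<bar>^(2*n) * M)"
    if t: "t \<in> {-T..T}" for t
  proof -
    have in1: "\<xi> t \<in> Cb" "\<phi> t \<in> Cb" using xi(2)[OF t] phi(2)[OF t] by auto
    have "Y t (\<xi> t) \<epsilon> - Af (\<phi> t) = (Af (\<xi> t) - Af (\<phi> t)) + \<epsilon>^(2*n) *\<^sub>R B t (\<xi> t) \<epsilon>"
      using split in1 CbD by (auto simp: Af_def)
    then have "norm (Y t (\<xi> t) \<epsilon> - Af (\<phi> t)) \<le> norm (Af (\<xi> t) - Af (\<phi> t)) + norm (\<epsilon>^(2*n) *\<^sub>R B t (\<xi> t) \<epsilon>)"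
      by (metis norm_triangle_ineq)
    then have "norm (Y t (\<xi> t) \<epsilon> - Af (\<phi> t)) \<le> norm (Af (\<xi> t) - Af (\<phi> t)) + \<bar>\<epsilon>\<bar>^(2*n) * norm (B t (\<xi> t) \<epsilon>)"
      by (simp add: power_abs)
    also have "\<dots> \<le> LA * E + \<bar>\<epsilon>\<bar>^(2*n) * M"
    proof (intro add_mono mult_left_mono)
      have "norm (Af (\<xi> t) - Af (\<phi> t)) \<le> LA * norm (e t)" using lipA[OF in1] by (simp add: e_def)
      also have "\<dots> \<le> LA * E" unfolding E_def using tm(2)[OF t] LA0 by (intro mult_left_mono) auto
      finally show "norm (Af (\<xi> t) - Af (\<phi> t)) \<le> LA * E" .
      show "norm (B t (\<xi> t) \<epsilon>) \<le> M" using bB in1 CbD by auto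
    qed simp
    finally have "\<bar>\<epsilon>\<bar> * norm (Y t (\<xi> t) \<epsilon> - Af (\<phi> t)) \<le> \<bar>\<epsilon>\<bar> * (LA * E + \<bar>\<epsilon>\<bar>^(2*n) * M)"
      by (simp add: mult_left_mono)
    then show ?thesis by (simp add: scaleR_diff_right[symmetric])
  qed
  have "norm (e tm - e 0) \<le> (\<bar>\<epsilon>\<bar> * (LA * E + \<bar>\<epsilon>\<bar>^(2*n) * M)) * \<bar>tm - 0\<bar>"
    by (rule mvt_vec[OF convex_real_interval(5) de dbound]) (use tm T0 in auto)
  also have "\<dots> \<le> (\<bar>\<epsilon>\<bar> * (LA * E + \<bar>\<epsilon>\<bar>^(2*n) * M)) * T"
    using tm(1) LA0 M by (intro mult_left_mono) (auto simp: E_def)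
  finally have "E \<le> (T * \<bar>\<epsilon>\<bar> * LA) * E + T * \<bar>\<epsilon>\<bar>^(2*n+1) * M"
    using xi(1) phi(1) unfolding E_def e_def by (simp add: algebra_simps)
  also have "\<dots> \<le> (1/4) * E + T * \<bar>\<epsilon>\<bar>^(2*n+1) * M"
    using sm3 M unfolding E_def by (intro add_mono mult_right_mono) auto
  finally have E1: "E \<le> (1/4) * E + T * \<bar>\<epsilon>\<bar>^(2*n+1) * M" .
  have c0: "0 \<le> T * \<bar>\<epsilon>\<bar>^(2*n+1) * M" using T0 M by simp
  have c1: "2 * T * M * \<bar>\<epsilon>\<bar>^(2*n+1) = 2 * (T * \<bar>\<epsilon>\<bar>^(2*n+1) * M)" by (simp add: mult_ac)
  have Eb: "E \<le> 2 * T * M * \<bar>\<epsilon>\<bar>^(2*n+1)"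
    unfolding c1 using E1 c0 by linarith
  have cmp: "norm (\<phi> t - \<xi> t) \<le> 2 * T * M * \<bar>\<epsilon>\<bar>^(2*n+1)" if "t \<in> {-T..T}" for t
    using tm(2)[OF that] Eb unfolding E_def e_def by (simp add: norm_minus_commute)
  have phi_at: "\<phi> t \<in> U \<and> (\<phi> has_vector_derivative \<epsilon> *\<^sub>R Af (\<phi> t)) (at t)" if t: "\<bar>t\<bar> \<le> real n" for t
  proof
    have tT: "t \<in> {-T..T}" "t \<in> {-T<..<T}" using t unfolding T_def by auto
    show "\<phi> t \<in> U" using phi(2)[OF tT(1)] CbU by auto
    have "(\<phi> has_vector_derivative \<epsilon> *\<^sub>R Af (\<phi> t)) (at t within {-T<..<T})"
      using phi(2)[OF tT(1)] has_vector_derivative_within_subset[of \<phi> _ t "{-T..T}" "{-T<..<T}"]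
        greaterThanLessThan_subseteq_atLeastAtMost_iff by blast
    then show "(\<phi> has_vector_derivative \<epsilon> *\<^sub>R Af (\<phi> t)) (at t)"
      using has_vector_derivative_within_open[OF tT(2) open_greaterThanLessThan] by blast
  qed
  have comp: "\<bar>(\<Sum>k=1..n. pcoef n k * ((\<phi> (real k) - \<phi> (- real k)) \<bullet> b)) - \<epsilon> * (Af x \<bullet> b)\<bar> \<le> \<bar>\<epsilon>\<bar>^(2*n+1) * C1"
    if b: "b \<in> Basis" for b
    using flow_component[OF oU n gA M phi_at phi(1) b] unfolding C1_def by (simp add: mult.assoc)
  define V1 where "V1 = \<epsilon> *\<^sub>R Af x - (\<Sum>k=1..n. pcoef n k *\<^sub>R (\<phi> (real k) - \<phi> (- real k)))"
  define V2 where "V2 = (\<Sum>k=1..n. pcoef n k *\<^sub>R ((\<phi> (real k) - \<xi> (real k)) - (\<phi> (- real k) - \<xi> (- real k))))"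
  have nV1: "norm V1 \<le> d * (\<bar>\<epsilon>\<bar>^(2*n+1) * C1)"
  proof -
    have "norm V1 \<le> (\<Sum>b\<in>Basis. \<bar>V1 \<bullet> b\<bar>)" by (rule norm_le_l1)
    also have "\<dots> \<le> (\<Sum>b\<in>(Basis::'a set). \<bar>\<epsilon>\<bar>^(2*n+1) * C1)"
    proof (rule sum_mono)
      fix b :: 'a assume b: "b \<in> Basis"
      have "V1 \<bullet> b = - ((\<Sum>k=1..n. pcoef n k * ((\<phi> (real k) - \<phi> (- real k)) \<bullet> b)) - \<epsilon> * (Af x \<bullet> b))"
        unfolding V1_def by (simp add: inner_diff_left inner_sum_left)
      then show "\<bar>V1 \<bullet> b\<bar> \<le> \<bar>\<epsilon>\<bar>^(2*n+1) * C1" using comp[OF b] by simp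
    qed
    also have "\<dots> = d * (\<bar>\<epsilon>\<bar>^(2*n+1) * C1)" by (simp add: d_def)
    finally show ?thesis .
  qed
  have nV2: "norm V2 \<le> (\<Sum>k=1..n. \<bar>pcoef n k\<bar>) * (4 * T * M * \<bar>\<epsilon>\<bar>^(2*n+1))"
  proof -
    have "norm V2 \<le> (\<Sum>k=1..n. norm (pcoef n k *\<^sub>R ((\<phi> (real k) - \<xi> (real k)) - (\<phi> (- real k) - \<xi> (- real k)))))"
      unfolding V2_def by (rule norm_sum)
    also have "\<dots> \<le> (\<Sum>k=1..n. \<bar>pcoef n k\<bar> * (4 * T * M * \<bar>\<epsilon>\<bar>^(2*n+1)))"
    proof (rule sum_mono)
      fix k assume k: "k \<in> {1..n}"
      have kT: "real k \<in> {-T..T}" "- real k \<in> {-T..T}" using k unfolding T_def by auto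
      have "norm ((\<phi> (real k) - \<xi> (real k)) - (\<phi> (- real k) - \<xi> (- real k)))
          \<le> norm (\<phi> (real k) - \<xi> (real k)) + norm (\<phi> (- real k) - \<xi> (- real k))" by (rule norm_triangle_ineq4)
      also have "\<dots> \<le> 4 * T * M * \<bar>\<epsilon>\<bar>^(2*n+1)" using cmp[OF kT(1)] cmp[OF kT(2)] by simp
      finally show "norm (pcoef n k *\<^sub>R ((\<phi> (real k) - \<xi> (real k)) - (\<phi> (- real k) - \<xi> (- real k))))
          \<le> \<bar>pcoef n k\<bar> * (4 * T * M * \<bar>\<epsilon>\<bar>^(2*n+1))" by (simp add: mult_left_mono)
    qed
    also have "\<dots> = (\<Sum>k=1..n. \<bar>pcoef n k\<bar>) * (4 * T * M * \<bar>\<epsilon>\<bar>^(2*n+1))" by (simp add: sum_distrib_right)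
    finally show ?thesis .
  qed
  have IF: "interp_field D F n \<epsilon> x = (1 / \<epsilon>) *\<^sub>R (\<Sum>k=1..n. pcoef n k *\<^sub>R (\<xi> (real k) - \<xi> (- real k)))"
    unfolding interp_field_def using fw bw by (intro arg_cong[where f="\<lambda>v. (1/\<epsilon>) *\<^sub>R v"] sum.cong) auto
  have S: "(\<Sum>k=1..n. pcoef n k *\<^sub>R (\<xi> (real k) - \<xi> (- real k))) = (\<Sum>k=1..n. pcoef n k *\<^sub>R (\<phi> (real k) - \<phi> (- real k))) - V2"
    unfolding V2_def sum_subtractf[symmetric] by (intro sum.cong refl) (simp add: algebra_simps)
  have e0: "\<epsilon> \<noteq> 0" using eps by simp
  have eq: "A x \<epsilon> - interp_field D F n \<epsilon> x = (1 / \<epsilon>) *\<^sub>R (V1 + V2)"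
    unfolding IF S V1_def using e0 by (simp add: Af_def algebra_simps)
  have "norm (A x \<epsilon> - interp_field D F n \<epsilon> x) \<le> (1 / \<bar>\<epsilon>\<bar>) * (norm V1 + norm V2)"
    unfolding eq by (simp add: norm_triangle_ineq divide_right_mono)
  also have "\<dots> \<le> (1 / \<bar>\<epsilon>\<bar>) * (d * (\<bar>\<epsilon>\<bar>^(2*n+1) * C1) + (\<Sum>k=1..n. \<bar>pcoef n k\<bar>) * (4 * T * M * \<bar>\<epsilon>\<bar>^(2*n+1)))"
    using nV1 nV2 by (intro mult_left_mono add_mono) auto
  also have "\<dots> = (d * C1 + 4 * T * M * (\<Sum>k=1..n. \<bar>pcoef n k\<bar>)) * \<bar>\<epsilon>\<bar>^(2*n)"
    using e0 by (simp add: field_simps)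
  also have "\<bar>\<epsilon>\<bar>^(2*n) = \<epsilon>^(2*n)" by (simp add: power_even_abs)
  finally show ?thesis using itdef unfolding d_def C1_def T_def by simp
qed



theorem mainTheorem7:
  fixes D D0 :: "'a::euclidean_space set"
    and F :: "real \<Rightarrow> 'a \<Rightarrow> 'a"
    and Y B :: "real \<Rightarrow> 'a \<Rightarrow> real \<Rightarrow> 'a"
    and A :: "'a \<Rightarrow> real \<Rightarrow> 'a"
    and n :: nat and \<epsilon>0 :: real
  assumes domain: "open D" "connected D" "D \<noteq> {}"
    and eps0: "\<epsilon>0 > 0"
    and smooth: "smooth_on (D \<times> {-\<epsilon>0<..<\<epsilon>0}) (\<lambda>(x, \<epsilon>). F \<epsilon> x)"
    and near_id: "\<forall>x\<in>D. F 0 x = x"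
    and invertible: "\<forall>\<epsilon>. \<bar>\<epsilon>\<bar> < \<epsilon>0 \<longrightarrow> inj_on (F \<epsilon>) D"
    and susp: "\<forall>\<epsilon>. \<bar>\<epsilon>\<bar> < \<epsilon>0 \<longrightarrow> suspension D F Y \<epsilon>"
    and split: "\<forall>\<epsilon> \<tau>. \<forall>x\<in>D. \<bar>\<epsilon>\<bar> < \<epsilon>0 \<longrightarrow> Y \<tau> x \<epsilon> = A x \<epsilon> + \<epsilon> ^ (2 * n) *\<^sub>R B \<tau> x \<epsilon>"
    and bounds: "\<exists>M. \<forall>\<epsilon>. \<bar>\<epsilon>\<bar> < \<epsilon>0 \<longrightarrow>
                   Ck_bounded (2 * n) D (\<lambda>x. A x \<epsilon>) M \<and>
                   Ck_bounded (2 * n) (UNIV \<times> D) (\<lambda>(\<tau>, x). B \<tau> x \<epsilon>) M"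
    and D0: "compact D0" "D0 \<subseteq> D"
  shows "\<exists>\<epsilon>1>0. \<exists>C. \<forall>\<epsilon>. 0 < \<bar>\<epsilon>\<bar> \<and> \<bar>\<epsilon>\<bar> < \<epsilon>1 \<longrightarrow>
           (\<forall>x\<in>D0. iterates_defined D F n \<epsilon> x \<and>
                    norm (A x \<epsilon> - interp_field D F n \<epsilon> x) \<le> C * \<epsilon> ^ (2 * n))"
proof -
  obtain M where Mb: "\<And>\<epsilon>. \<bar>\<epsilon>\<bar> < \<epsilon>0 \<Longrightarrow> Ck_bounded (2 * n) D (\<lambda>x. A x \<epsilon>) M \<and>
                   Ck_bounded (2 * n) (UNIV \<times> D) (\<lambda>(\<tau>, x). B \<tau> x \<epsilon>) M"
    using bounds by blast
  have Abound: "norm (A y \<epsilon>) \<le> M" if "y \<in> D" "\<bar>\<epsilon>\<bar> < \<epsilon>0" for y \<epsilon>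
  proof -
    have "\<forall>vs. set vs \<subseteq> Basis \<longrightarrow> length vs \<le> 2*n \<longrightarrow> (\<forall>x\<in>D. norm (pderivs vs (\<lambda>x. A x \<epsilon>) x) \<le> M)"
      using Mb[OF that(2)] unfolding Ck_bounded_def by blast
    from this[rule_format, of "[]" y] that(1) show ?thesis by simp
  qed
  obtain y0 where y0: "y0 \<in> D" using domain(3) by blast
  have "norm (A y0 0) \<le> M" using Abound[OF y0, of 0] eps0 by simp
  then have M0: "0 \<le> M" using norm_ge_zero[of "A y0 0"] by linarith
  show ?thesis
  proof (cases "n = 0")
    case True
    have "\<forall>\<epsilon>. 0 < \<bar>\<epsilon>\<bar> \<and> \<bar>\<epsilon>\<bar> < \<epsilon>0 \<longrightarrow>
           (\<forall>x\<in>D0. iterates_defined D F n \<epsilon> x \<and>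
                    norm (A x \<epsilon> - interp_field D F n \<epsilon> x) \<le> M * \<epsilon> ^ (2 * n))"
    proof (intro allI impI ballI)
      fix \<epsilon> x assume e: "0 < \<bar>\<epsilon>\<bar> \<and> \<bar>\<epsilon>\<bar> < \<epsilon>0" and x: "x \<in> D0"
      have "iterates_defined D F n \<epsilon> x" unfolding iterates_defined_def using True by simp
      moreover have "norm (A x \<epsilon> - interp_field D F n \<epsilon> x) \<le> M * \<epsilon> ^ (2 * n)"
        using Abound[of x \<epsilon>] x D0 e True unfolding interp_field_def by auto
      ultimately show "iterates_defined D F n \<epsilon> x \<and> norm (A x \<epsilon> - interp_field D F n \<epsilon> x) \<le> M * \<epsilon> ^ (2 * n)" ..
    qed
    then show ?thesis using eps0 by blast
  next
    case False
    then have n: "1 \<le> n" by simp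
    obtain r0 where r0: "r0 > 0" "(\<Union>x\<in>D0. ball x r0) \<subseteq> D"
      using compact_subset_open_imp_ball_epsilon_subset[OF D0(1) domain(1) D0(2)] by blast
    define r where "r = r0 / 2"
    have r: "0 < r" using r0 by (simp add: r_def)
    have rb: "ball x (2 * r) \<subseteq> D" if "x \<in> D0" for x using r0 that unfolding r_def by auto
    define Q where "Q = (real n + 1) * (2 * M + real DIM('a) * M + real DIM(real \<times> 'a) * M + 1) * 4"
    have "0 \<le> real DIM('a) * M" "0 \<le> real DIM(real \<times> 'a) * M" using M0 by simp_all
    then have s0: "0 < 2 * M + real DIM('a) * M + real DIM(real \<times> 'a) * M + 1" using M0 by linarith
    have n0: "0 < real n + 1" by simp
    have Q0: "0 < Q" unfolding Q_def using s0 n0 by (intro mult_pos_pos) auto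
    define \<epsilon>1 where "\<epsilon>1 = min (min \<epsilon>0 1) (min r 1 / Q)"
    have e1: "0 < \<epsilon>1" unfolding \<epsilon>1_def using eps0 Q0 r by auto
    define C where "C = (real DIM('a) * (((real DIM('a) * 2^(2*n) * M)^(2*n) * M) * (\<Sum>k=1..n. \<bar>pcoef n k\<bar> * 2 * real k^(2*n+1)) / fact (2*n+1))
            + 4 * (real n + 1) * M * (\<Sum>k=1..n. \<bar>pcoef n k\<bar>))"
    have "\<forall>\<epsilon>. 0 < \<bar>\<epsilon>\<bar> \<and> \<bar>\<epsilon>\<bar> < \<epsilon>1 \<longrightarrow>
           (\<forall>x\<in>D0. iterates_defined D F n \<epsilon> x \<and>
                    norm (A x \<epsilon> - interp_field D F n \<epsilon> x) \<le> C * \<epsilon> ^ (2 * n))"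
    proof (intro allI impI ballI)
      fix \<epsilon> x assume e: "0 < \<bar>\<epsilon>\<bar> \<and> \<bar>\<epsilon>\<bar> < \<epsilon>1" and x: "x \<in> D0"
      have e0: "\<bar>\<epsilon>\<bar> < \<epsilon>0" "\<bar>\<epsilon>\<bar> \<le> 1" using e unfolding \<epsilon>1_def by auto
      have "\<bar>\<epsilon>\<bar> * Q \<le> min r 1"
      proof -
        have "\<bar>\<epsilon>\<bar> \<le> min r 1 / Q" using e unfolding \<epsilon>1_def by auto
        then show ?thesis using Q0 by (simp add: pos_le_divide_eq)
      qed
      then have small: "(real n + 1) * \<bar>\<epsilon>\<bar> * (2 * M + real DIM('a) * M + real DIM(real \<times> 'a) * M + 1) * 4 \<le> min r 1"
        unfolding Q_def by (simp add: mult_ac)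
      have sp: "\<forall>\<tau>. \<forall>y\<in>D. Y \<tau> y \<epsilon> = A y \<epsilon> + \<epsilon> ^ (2 * n) *\<^sub>R B \<tau> y \<epsilon>" using split e0 by blast
      have "iterates_defined D F n \<epsilon> x \<and> norm (A x \<epsilon> - interp_field D F n \<epsilon> x) \<le> C * \<epsilon> ^ (2 * n)"
      proof -
        have ep: "0 < \<bar>\<epsilon>\<bar>" using e by simp
        have ij: "inj_on (F \<epsilon>) D" using invertible e0 by blast
        have su: "suspension D F Y \<epsilon>" using susp e0 by blast
        have CA: "Ck_bounded (2 * n) D (\<lambda>y. A y \<epsilon>) M" using Mb[OF e0(1)] by blast
        have CB: "Ck_bounded (2 * n) (UNIV \<times> D) (\<lambda>(\<tau>, y). B \<tau> y \<epsilon>) M" using Mb[OF e0(1)] by blast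
        show ?thesis unfolding C_def
          using core[where D=D and F=F and Y=Y and B=B and A=A and n=n and \<epsilon>=\<epsilon> and M=M and r=r and x=x,
              OF domain(1) n ep e0(2) ij su sp CA CB M0 r rb[OF x] small] .
      qed
      then show "iterates_defined D F n \<epsilon> x \<and> norm (A x \<epsilon> - interp_field D F n \<epsilon> x) \<le> C * \<epsilon> ^ (2 * n)" .
    qed
    then show ?thesis using e1 by blast
  qed
qed

end
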